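(* Let $X\subseteq\mathbf{P}(\mathbf{w})$, $\mathbf{w}=(w_0,\dots,w_n)$, be a closed subscheme of dimension $d$ with Hilbert quasi-polynomial $HQ_X(t)=\sum_{i=0}^d c_i(t)t^i$. Let $m$ be a positive integer, let $\mathbf{w}'=(w_0,\dots,w_n,m)$, and let $X'\subseteq\mathbf{P}(\mathbf{w}')$ be the $m$-cone over $X$. Then \[ \deg(X')=\frac{d!}{q'}\sum_{\substack{0\le j<q\\ \gcd(m,q)\mid j}} c_d(j), \] where $q=\operatorname{lcm}(w_0,\dots,w_n)$ and $q'=\operatorname{lcm}(w_0,\dots,w_n,m)$.
   Context: $\Bbbk$ algebraically closed; $S(\mathbf{w})=\Bbbk[x_0,\dots,x_n]$ graded by $\deg x_i=w_i$, $\mathbf{P}(\mathbf{w})=\operatorname{Proj}S(\mathbf{w})$. For a closed subscheme $X$ of dimension $d$ with homogeneous ideal $I_X$, the Hilbert function $t\mapsto\dim_\Bbbk(S(\mathbf{w})/I_X)_t$ agrees for $t\gg0$ with a quasi-polynomial $HQ_X(t)=\sum_{i=0}^d c_i(t)t^i$ whose coefficients $c_i:\mathbb{Z}\to\Bbbk$ are periodic, $c_d\ne0$, with period dividing $\operatorname{lcm}(w_0,\dots,w_n)$. The degree of $X$ is $\deg X=d!\,c_d(0)$. If $\mathbf{w}'$ is obtained by appending $m$ to $\mathbf{w}$, the $m$-cone over $X$ is the subscheme of $\mathbf{P}(\mathbf{w}')$ defined by $I_X S(\mathbf{w}')$. *)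

theory Defs
  imports "HOL-Library.Poly_Mapping" "HOL-Computational_Algebra.Polynomial"
begin

(* Polynomials in variables x_0, x_1, ... over 'k: monomials are exponent vectors nat =>0 nat *)
type_synonym 'k mpoly = "(nat \<Rightarrow>\<^sub>0 nat) \<Rightarrow>\<^sub>0 'k"

definition pscale :: "'k::field \<Rightarrow> 'k mpoly \<Rightarrow> 'k mpoly" where
  "pscale c p = Poly_Mapping.map (\<lambda>x. c * x) p"

definition kdim :: "'k::field mpoly set \<Rightarrow> nat" where
  "kdim V = vector_space.dim pscale V"

definition wdeg :: "nat list \<Rightarrow> (nat \<Rightarrow>\<^sub>0 nat) \<Rightarrow> nat" where
  "wdeg w \<alpha> = (\<Sum>i<length w. w ! i * Poly_Mapping.lookup \<alpha> i)"

(* membership in S(w) = k[x_0,...,x_n], n+1 = length w *)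
definition in_ring :: "nat list \<Rightarrow> 'k::field mpoly \<Rightarrow> bool" where
  "in_ring w p \<longleftrightarrow> (\<forall>\<alpha>\<in>Poly_Mapping.keys p. \<forall>i. Poly_Mapping.lookup \<alpha> i \<noteq> 0 \<longrightarrow> i < length w)"

definition graded_piece :: "nat list \<Rightarrow> int \<Rightarrow> 'k::field mpoly set" where
  "graded_piece w t = {p. in_ring w p \<and> (\<forall>\<alpha>\<in>Poly_Mapping.keys p. int (wdeg w \<alpha>) = t)}"

definition homog_comp :: "nat list \<Rightarrow> int \<Rightarrow> 'k::field mpoly \<Rightarrow> 'k mpoly" where
  "homog_comp w t p = Abs_poly_mapping (\<lambda>\<alpha>. if int (wdeg w \<alpha>) = t then Poly_Mapping.lookup p \<alpha> else 0)"

definition ideal_in :: "nat list \<Rightarrow> 'k::field mpoly set \<Rightarrow> bool" where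
  "ideal_in w I \<longleftrightarrow> I \<subseteq> {p. in_ring w p} \<and> 0 \<in> I \<and>
     (\<forall>p\<in>I. \<forall>q\<in>I. p + q \<in> I) \<and> (\<forall>p\<in>I. \<forall>q. in_ring w q \<longrightarrow> q * p \<in> I)"

definition homog_ideal :: "nat list \<Rightarrow> 'k::field mpoly set \<Rightarrow> bool" where
  "homog_ideal w I \<longleftrightarrow> ideal_in w I \<and> (\<forall>p\<in>I. \<forall>t. homog_comp w t p \<in> I)"

definition monom :: "(nat \<Rightarrow>\<^sub>0 nat) \<Rightarrow> 'k::field mpoly" where
  "monom \<alpha> = Poly_Mapping.single \<alpha> 1"

(* I is saturated w.r.t. the irrelevant ideal m = (x_0,...,x_n):
   if m^N f \<subseteq> I for some N (m^N is generated by the monomials of total degree N) then f \<in> I *)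
definition saturated :: "nat list \<Rightarrow> 'k::field mpoly set \<Rightarrow> bool" where
  "saturated w I \<longleftrightarrow> (\<forall>f. in_ring w f \<longrightarrow>
     (\<exists>N. \<forall>\<alpha>. (\<forall>i. Poly_Mapping.lookup \<alpha> i \<noteq> 0 \<longrightarrow> i < length w) \<and> (\<Sum>i<length w. Poly_Mapping.lookup \<alpha> i) = N
            \<longrightarrow> monom \<alpha> * f \<in> I) \<longrightarrow> f \<in> I)"

definition ext_ideal :: "nat list \<Rightarrow> 'k::field mpoly set \<Rightarrow> 'k mpoly set" where
  "ext_ideal w' I = \<Inter>{J. ideal_in w' J \<and> I \<subseteq> J}"

(* Hilbert function t \<mapsto> dim_k (S(w)/I)_t = dim S(w)_t - dim (I \<inter> S(w)_t) *)
definition hilb :: "nat list \<Rightarrow> 'k::field mpoly set \<Rightarrow> int \<Rightarrow> nat" where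
  "hilb w I t = kdim (graded_piece w t :: 'k mpoly set) - kdim (I \<inter> graded_piece w t)"

definition hilb_qpoly :: "nat list \<Rightarrow> 'k::field mpoly set \<Rightarrow> nat \<Rightarrow> (nat \<Rightarrow> int \<Rightarrow> rat) \<Rightarrow> bool" where
  "hilb_qpoly w I d c \<longleftrightarrow>
     (\<forall>i\<le>d. \<forall>t. c i (t + int (Lcm (set w))) = c i t) \<and>
     c d \<noteq> (\<lambda>_. 0) \<and>
     (\<exists>t0. \<forall>t\<ge>t0. rat_of_nat (hilb w I t) = (\<Sum>i\<le>d. c i t * rat_of_int t ^ i))"

end

theory Submission
  imports Defs
begin

lemma pscale_eq: "pscale c p = Poly_Mapping.single 0 c * p"
  by (simp add: pscale_def mult_map_scale_conv_mult)

interpretation pv: vector_space "pscale :: 'k::field \<Rightarrow> 'k mpoly \<Rightarrow> 'k mpoly"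
  by unfold_locales (simp_all add: pscale_eq algebra_simps single_add mult_single flip: mult.assoc)

lemma kdim_eq: "kdim V = pv.dim V"
  by (simp add: kdim_def)

lemma lookup_Y_mult:
  fixes q :: "'k::field mpoly"
  shows "Poly_Mapping.lookup (monom (Poly_Mapping.single n (Suc 0)) * q) \<alpha> =
    (if Poly_Mapping.lookup \<alpha> n = 0 then 0 else Poly_Mapping.lookup q (\<alpha> - Poly_Mapping.single n (Suc 0)))"
proof -
  have "Poly_Mapping.lookup (monom (Poly_Mapping.single n (Suc 0)) * q) \<alpha> =
      Sum_any (\<lambda>qq. Poly_Mapping.lookup q qq when \<alpha> = Poly_Mapping.single n (Suc 0) + qq)"
    by (simp add: monom_def lookup_mult lookup_single when_mult)
  also have "\<dots> = (if Poly_Mapping.lookup \<alpha> n = 0 then 0 else Poly_Mapping.lookup q (\<alpha> - Poly_Mapping.single n (Suc 0)))"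
  proof (cases "Poly_Mapping.lookup \<alpha> n = 0")
    case True
    have "\<And>qq. Poly_Mapping.lookup (Poly_Mapping.single n (Suc 0) + qq) n \<noteq> 0"
      by (simp add: lookup_add)
    then have "\<And>qq. \<alpha> \<noteq> Poly_Mapping.single n (Suc 0) + qq"
      using True by metis
    then show ?thesis using True by (simp add: when_def)
  next
    case False
    have "\<And>qq. (\<alpha> = Poly_Mapping.single n (Suc 0) + qq) = (qq = \<alpha> - Poly_Mapping.single n (Suc 0))"
    proof
      fix qq assume "\<alpha> = Poly_Mapping.single n (Suc 0) + qq"
      then show "qq = \<alpha> - Poly_Mapping.single n (Suc 0)" by simp
    next
      fix qq assume "qq = \<alpha> - Poly_Mapping.single n (Suc 0)"
      then show "\<alpha> = Poly_Mapping.single n (Suc 0) + qq" using False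
        by (intro poly_mapping_eqI) (auto simp: lookup_add lookup_minus lookup_single when_def)
    qed
    then show ?thesis using False by simp
  qed
  finally show ?thesis .
qed


abbreviation lk :: "('a \<Rightarrow>\<^sub>0 'b::zero) \<Rightarrow> 'a \<Rightarrow> 'b" where "lk \<equiv> Poly_Mapping.lookup"
abbreviation ks :: "('a \<Rightarrow>\<^sub>0 'b::zero) \<Rightarrow> 'a set" where "ks \<equiv> Poly_Mapping.keys"
abbreviation ev :: "nat \<Rightarrow> nat \<Rightarrow>\<^sub>0 nat" where "ev n \<equiv> Poly_Mapping.single n (Suc 0)"
abbreviation Yv :: "nat \<Rightarrow> 'k::field mpoly" where "Yv n \<equiv> monom (ev n)"

definition yfree :: "nat \<Rightarrow> 'k::field mpoly \<Rightarrow> bool" where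
  "yfree n p \<longleftrightarrow> (\<forall>\<alpha>\<in>ks p. lk \<alpha> n = 0)"

definition lowp :: "nat \<Rightarrow> 'k::field mpoly \<Rightarrow> 'k mpoly" where
  "lowp n p = Abs_poly_mapping (\<lambda>\<alpha>. if lk \<alpha> n = 0 then lk p \<alpha> else 0)"

definition shiftp :: "nat \<Rightarrow> 'k::field mpoly \<Rightarrow> 'k mpoly" where
  "shiftp n p = Abs_poly_mapping (\<lambda>\<alpha>. lk p (\<alpha> + ev n))"

lemma lookup_lowp: "lk (lowp n p) \<alpha> = (if lk \<alpha> n = 0 then lk p \<alpha> else 0)"
proof -
  have "finite {\<alpha>. (if lk \<alpha> n = 0 then lk p \<alpha> else 0) \<noteq> 0}"
    by (rule finite_subset[of _ "ks p"]) (auto simp: in_keys_iff)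
  then show ?thesis by (simp add: lowp_def)
qed

lemma lookup_shiftp: "lk (shiftp n p) \<alpha> = lk p (\<alpha> + ev n)"
proof -
  have "{\<alpha>. lk p (\<alpha> + ev n) \<noteq> 0} = (\<lambda>\<alpha>. \<alpha> + ev n) -` ks p"
    by (auto simp: in_keys_iff)
  moreover have "finite ((\<lambda>\<alpha>. \<alpha> + ev n) -` ks p)"
    by (rule finite_vimageI) (auto simp: inj_def)
  ultimately show ?thesis by (simp add: shiftp_def)
qed

lemma ev_cancel: "lk \<alpha> n \<noteq> 0 \<Longrightarrow> \<alpha> - ev n + ev n = \<alpha>"
  by (intro poly_mapping_eqI) (auto simp: lookup_add lookup_minus lookup_single when_def)

lemma decomp: "p = lowp n p + Yv n * shiftp n p"
  by (intro poly_mapping_eqI) (auto simp: lookup_add lookup_Y_mult lookup_lowp lookup_shiftp ev_cancel)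

lemma lowp_add: "lowp n (p + q) = lowp n p + lowp n q"
  by (intro poly_mapping_eqI) (auto simp: lookup_add lookup_lowp)

lemma shiftp_add: "shiftp n (p + q) = shiftp n p + shiftp n q"
  by (intro poly_mapping_eqI) (auto simp: lookup_add lookup_shiftp)

lemma lowp_0[simp]: "lowp n 0 = 0" and shiftp_0[simp]: "shiftp n 0 = 0"
  by (intro poly_mapping_eqI; simp add: lookup_lowp lookup_shiftp)+

lemma lowp_Y: "lowp n (Yv n * q) = 0"
  by (intro poly_mapping_eqI) (auto simp: lookup_Y_mult lookup_lowp)

lemma shiftp_Y: "shiftp n (Yv n * q) = q"
  by (intro poly_mapping_eqI) (auto simp: lookup_Y_mult lookup_shiftp lookup_add)

lemma lowp_yfree: assumes "yfree n p" shows "lowp n p = p"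
proof (intro poly_mapping_eqI)
  fix \<alpha> show "lk (lowp n p) \<alpha> = lk p \<alpha>"
  proof (cases "lk \<alpha> n = 0")
    case False then have "\<alpha> \<notin> ks p" using assms by (auto simp: yfree_def)
    then show ?thesis using False by (simp add: lookup_lowp in_keys_iff)
  qed (simp add: lookup_lowp)
qed

lemma shiftp_yfree: assumes "yfree n p" shows "shiftp n p = 0"
proof (intro poly_mapping_eqI)
  fix \<alpha>
  have "lk (\<alpha> + ev n) n \<noteq> 0" by (simp add: lookup_add)
  then have "\<alpha> + ev n \<notin> ks p" using assms by (auto simp: yfree_def)
  then show "lk (shiftp n p) \<alpha> = lk 0 \<alpha>" by (simp add: lookup_shiftp in_keys_iff)
qed

lemma yfree_lowp: "yfree n (lowp n p)"
  by (auto simp: yfree_def in_keys_iff lookup_lowp split: if_splits)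

lemma yfree_mult: "yfree n a \<Longrightarrow> yfree n b \<Longrightarrow> yfree n (a * b)"
  unfolding yfree_def using keys_mult[of a b] by (force simp: lookup_add)

lemma lowp_mult: assumes "yfree n p" shows "lowp n (q * p) = lowp n q * p"
proof -
  have "q * p = lowp n q * p + Yv n * (shiftp n q * p)"
    by (subst decomp[of q n]) (simp add: algebra_simps)
  then have "lowp n (q * p) = lowp n (lowp n q * p) + lowp n (Yv n * (shiftp n q * p))"
    by (metis lowp_add)
  then show ?thesis using assms by (simp add: lowp_Y lowp_yfree yfree_mult yfree_lowp)
qed

lemma shiftp_mult: assumes "yfree n p" shows "shiftp n (q * p) = shiftp n q * p"
proof -
  have "q * p = lowp n q * p + Yv n * (shiftp n q * p)"
    by (subst decomp[of q n]) (simp add: algebra_simps)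
  then have "shiftp n (q * p) = shiftp n (lowp n q * p) + shiftp n (Yv n * (shiftp n q * p))"
    by (metis shiftp_add)
  then show ?thesis using assms by (simp add: shiftp_Y shiftp_yfree yfree_mult yfree_lowp)
qed


lemma lookup_pscale: "lk (pscale c p) \<alpha> = c * lk p \<alpha>"
  by (simp add: pscale_def map.rep_eq when_def)

lemma keys_lowp: "\<alpha> \<in> ks (lowp n p) \<longleftrightarrow> lk \<alpha> n = 0 \<and> \<alpha> \<in> ks p"
  by (simp add: in_keys_iff lookup_lowp)

lemma keys_shiftp: "\<alpha> \<in> ks (shiftp n p) \<longleftrightarrow> \<alpha> + ev n \<in> ks p"
  by (simp add: in_keys_iff lookup_shiftp)

lemma keys_Y_mult: "\<alpha> \<in> ks (Yv n * q) \<longleftrightarrow> lk \<alpha> n \<noteq> 0 \<and> \<alpha> - ev n \<in> ks q"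
  by (simp add: in_keys_iff lookup_Y_mult)

lemma keys_pscale: "\<alpha> \<in> ks (pscale c p) \<Longrightarrow> \<alpha> \<in> ks p"
  by (simp add: in_keys_iff lookup_pscale)

lemma in_ringI: "(\<And>\<alpha> i. \<alpha> \<in> ks p \<Longrightarrow> lk \<alpha> i \<noteq> 0 \<Longrightarrow> i < length w) \<Longrightarrow> in_ring w p"
  by (simp add: in_ring_def)

lemma in_ringD: "in_ring w p \<Longrightarrow> \<alpha> \<in> ks p \<Longrightarrow> lk \<alpha> i \<noteq> 0 \<Longrightarrow> i < length w"
  by (simp add: in_ring_def)

lemma in_ring_mono: "in_ring w p \<Longrightarrow> length w \<le> length w' \<Longrightarrow> in_ring w' p"
  by (rule in_ringI) (drule (2) in_ringD, simp)

lemma in_ring_add: "in_ring w p \<Longrightarrow> in_ring w q \<Longrightarrow> in_ring w (p + q)"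
proof (rule in_ringI)
  fix \<alpha> i assume "in_ring w p" "in_ring w q" "\<alpha> \<in> ks (p + q)" "lk \<alpha> i \<noteq> 0"
  moreover have "\<alpha> \<in> ks p \<or> \<alpha> \<in> ks q" using keys_add[of p q] calculation(3) by blast
  ultimately show "i < length w" using in_ringD by blast
qed

lemma in_ring_mult: "in_ring w p \<Longrightarrow> in_ring w q \<Longrightarrow> in_ring w (p * q)"
proof (rule in_ringI)
  fix \<alpha> i assume p: "in_ring w p" and q: "in_ring w q" and a: "\<alpha> \<in> ks (p * q)" and l: "lk \<alpha> i \<noteq> 0"
  obtain a b where ab: "\<alpha> = a + b" "a \<in> ks p" "b \<in> ks q" using keys_mult[of p q] a by blast
  have "lk a i \<noteq> 0 \<or> lk b i \<noteq> 0" using l ab(1) by (simp add: lookup_add)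
  then show "i < length w" using in_ringD[OF p ab(2)] in_ringD[OF q ab(3)] by blast
qed

lemma in_ring_0: "in_ring w 0"
  by (simp add: in_ring_def)

lemma in_ring_single0: "in_ring w (Poly_Mapping.single 0 c)"
  by (rule in_ringI) (simp split: if_splits)

lemma in_ring_1: "in_ring w 1"
  by (rule in_ringI) simp

lemma in_ring_Y: "in_ring (w @ [m]) (Yv (length w))"
  by (rule in_ringI) (simp add: monom_def lookup_single when_def split: if_splits)

lemma in_ring_yfree: "in_ring w p \<Longrightarrow> yfree (length w) p"
  unfolding yfree_def by (meson in_ringD less_irrefl)

lemma in_ring_lowp: assumes "in_ring (w @ [m]) p" shows "in_ring w (lowp (length w) p)"
proof (rule in_ringI)
  fix \<alpha> i assume a: "\<alpha> \<in> ks (lowp (length w) p)" and l: "lk \<alpha> i \<noteq> 0"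
  then have "lk \<alpha> (length w) = 0" "\<alpha> \<in> ks p" by (simp_all add: keys_lowp)
  then have "i < Suc (length w)" "i \<noteq> length w" using in_ringD[OF assms _ l] l by auto
  then show "i < length w" by simp
qed

lemma in_ring_shiftp: assumes "in_ring w' p" shows "in_ring w' (shiftp n p)"
proof (rule in_ringI)
  fix \<alpha> i assume a: "\<alpha> \<in> ks (shiftp n p)" and l: "lk \<alpha> i \<noteq> 0"
  then have "\<alpha> + ev n \<in> ks p" "lk (\<alpha> + ev n) i \<noteq> 0" by (simp_all add: keys_shiftp lookup_add)
  then show "i < length w'" using in_ringD[OF assms] by blast
qed

lemma wdeg_append: "wdeg (w @ [m]) \<alpha> = wdeg w \<alpha> + m * lk \<alpha> (length w)"
  unfolding wdeg_def by (simp add: nth_append)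

lemma wdeg_add: "wdeg w (\<alpha> + \<beta>) = wdeg w \<alpha> + wdeg w \<beta>"
  unfolding wdeg_def by (simp add: lookup_add algebra_simps sum.distrib)

lemma wdeg_ev: "wdeg (w @ [m]) (ev (length w)) = m"
proof -
  have "wdeg w (ev (length w)) = 0"
    unfolding wdeg_def by (auto intro!: sum.neutral simp: lookup_single when_def)
  then show ?thesis by (simp add: wdeg_append)
qed

lemma wdeg_yfree: "lk \<alpha> (length w) = 0 \<Longrightarrow> wdeg (w @ [m]) \<alpha> = wdeg w \<alpha>"
  by (simp add: wdeg_append)

lemma gp_iff: "p \<in> graded_piece w t \<longleftrightarrow> in_ring w p \<and> (\<forall>\<alpha>\<in>ks p. int (wdeg w \<alpha>) = t)"
  by (simp add: graded_piece_def)

lemma gp_lowp: assumes "p \<in> graded_piece (w @ [m]) t" shows "lowp (length w) p \<in> graded_piece w t"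
  unfolding gp_iff
proof
  show "in_ring w (lowp (length w) p)" using assms in_ring_lowp gp_iff by blast
  show "\<forall>\<alpha>\<in>ks (lowp (length w) p). int (wdeg w \<alpha>) = t"
  proof
    fix \<alpha> assume "\<alpha> \<in> ks (lowp (length w) p)"
    then have "lk \<alpha> (length w) = 0" "\<alpha> \<in> ks p" by (simp_all add: keys_lowp)
    moreover have "int (wdeg (w @ [m]) \<alpha>) = t" using assms \<open>\<alpha> \<in> ks p\<close> by (simp add: gp_iff)
    ultimately show "int (wdeg w \<alpha>) = t" using wdeg_yfree[of \<alpha> w m] by simp
  qed
qed

lemma gp_shiftp: assumes "p \<in> graded_piece (w @ [m]) t"
  shows "shiftp (length w) p \<in> graded_piece (w @ [m]) (t - int m)"
  unfolding gp_iff
proof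
  show "in_ring (w @ [m]) (shiftp (length w) p)" using assms in_ring_shiftp gp_iff by blast
  show "\<forall>\<alpha>\<in>ks (shiftp (length w) p). int (wdeg (w @ [m]) \<alpha>) = t - int m"
  proof
    fix \<alpha> assume "\<alpha> \<in> ks (shiftp (length w) p)"
    then have "\<alpha> + ev (length w) \<in> ks p" by (simp add: keys_shiftp)
    then have "int (wdeg (w @ [m]) (\<alpha> + ev (length w))) = t" using assms by (simp add: gp_iff)
    then show "int (wdeg (w @ [m]) \<alpha>) = t - int m" by (simp add: wdeg_add wdeg_ev)
  qed
qed

lemma gp_sub: assumes "p \<in> graded_piece w t" shows "p \<in> graded_piece (w @ [m]) t"
  unfolding gp_iff
proof
  have r: "in_ring w p" using assms gp_iff by blast
  then show "in_ring (w @ [m]) p" by (rule in_ring_mono) simp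
  show "\<forall>\<alpha>\<in>ks p. int (wdeg (w @ [m]) \<alpha>) = t"
  proof
    fix \<alpha> assume a: "\<alpha> \<in> ks p"
    then have "lk \<alpha> (length w) = 0" using in_ring_yfree[OF r] by (simp add: yfree_def)
    then show "int (wdeg (w @ [m]) \<alpha>) = t" using assms a wdeg_yfree[of \<alpha> w m] by (simp add: gp_iff)
  qed
qed

lemma gp_Y: assumes "q \<in> graded_piece (w @ [m]) (t - int m)"
  shows "Yv (length w) * q \<in> graded_piece (w @ [m]) t"
  unfolding gp_iff
proof
  show "in_ring (w @ [m]) (Yv (length w) * q)"
    using assms in_ring_Y in_ring_mult gp_iff by blast
  show "\<forall>\<alpha>\<in>ks (Yv (length w) * q). int (wdeg (w @ [m]) \<alpha>) = t"
  proof
    fix \<alpha> assume "\<alpha> \<in> ks (Yv (length w) * q)"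
    then have a: "lk \<alpha> (length w) \<noteq> 0" "\<alpha> - ev (length w) \<in> ks q" by (simp_all add: keys_Y_mult)
    have "wdeg (w @ [m]) \<alpha> = wdeg (w @ [m]) (\<alpha> - ev (length w) + ev (length w))"
      using ev_cancel[OF a(1)] by simp
    also have "\<dots> = wdeg (w @ [m]) (\<alpha> - ev (length w)) + m"
      by (simp only: wdeg_add wdeg_ev)
    finally show "int (wdeg (w @ [m]) \<alpha>) = t" using assms a(2) by (simp add: gp_iff)
  qed
qed

lemma gp_add: assumes "p \<in> graded_piece w t" "q \<in> graded_piece w t" shows "p + q \<in> graded_piece w t"
  unfolding gp_iff
proof
  show "in_ring w (p + q)" using assms in_ring_add gp_iff by blast
  show "\<forall>\<alpha>\<in>ks (p + q). int (wdeg w \<alpha>) = t"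
  proof
    fix \<alpha> assume "\<alpha> \<in> ks (p + q)"
    then have "\<alpha> \<in> ks p \<or> \<alpha> \<in> ks q" using keys_add[of p q] by blast
    then show "int (wdeg w \<alpha>) = t" using assms by (auto simp: gp_iff)
  qed
qed

lemma gp_0: "0 \<in> graded_piece w t"
  by (simp add: gp_iff in_ring_0)

lemma gp_pscale: assumes "p \<in> graded_piece w t" shows "pscale c p \<in> graded_piece w t"
proof -
  have "pscale c p = Poly_Mapping.single 0 c * p" by (rule pscale_eq)
  moreover have "in_ring w p" using assms gp_iff by blast
  ultimately have "in_ring w (pscale c p)" using in_ring_mult[OF in_ring_single0] by simp
  moreover have "\<forall>\<alpha>\<in>ks (pscale c p). int (wdeg w \<alpha>) = t"
  proof
    fix \<alpha> assume "\<alpha> \<in> ks (pscale c p)"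
    then have "\<alpha> \<in> ks p" by (rule keys_pscale)
    then show "int (wdeg w \<alpha>) = t" using assms by (simp add: gp_iff)
  qed
  ultimately show ?thesis by (simp add: gp_iff)
qed

lemma subspace_gp: "pv.subspace (graded_piece w t)"
  by (simp add: pv.subspace_def gp_0 gp_add gp_pscale)

context vector_space begin

lemma fin_basis:
  assumes "finite W" "V \<subseteq> span W"
  obtains B where "B \<subseteq> V" "independent B" "V \<subseteq> span B" "card B = dim V" "finite B"
proof -
  obtain B where B: "B \<subseteq> V" "independent B" "V \<subseteq> span B" "card B = dim V"
    by (rule basis_exists)
  have "finite B" using independent_span_bound[OF assms(1) B(2)] B(1) assms(2) by auto
  with B that show ?thesis by blast
qed

lemma dim_le_sub:
  assumes "finite W" "V \<subseteq> span W" "U \<subseteq> V"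
  shows "dim U \<le> dim V"
proof -
  obtain B where B: "B \<subseteq> V" "independent B" "V \<subseteq> span B" "card B = dim V" "finite B"
    using fin_basis[OF assms(1,2)] .
  have "U \<subseteq> span B" using assms(3) B(3) by auto
  from dim_le_card[OF this B(5)] B(4) show ?thesis by simp
qed

lemma dim_direct_sum:
  assumes A: "subspace A" and Bs: "subspace B" and AB: "A \<inter> B \<subseteq> {0}"
    and W: "finite W" "A \<subseteq> span W" "B \<subseteq> span W"
  shows "dim {a + b | a b. a \<in> A \<and> b \<in> B} = dim A + dim B"
proof -
  obtain BA where BA: "BA \<subseteq> A" "independent BA" "A \<subseteq> span BA" "card BA = dim A" "finite BA"
    using fin_basis[OF W(1,2)] .
  obtain BB where BB: "BB \<subseteq> B" "independent BB" "B \<subseteq> span BB" "card BB = dim B" "finite BB"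
    using fin_basis[OF W(1,3)] .
  have spA: "span BA = A" using BA A by (simp add: span_subspace)
  have spB: "span BB = B" using BB Bs by (simp add: span_subspace)
  have disj: "BA \<inter> BB = {}"
  proof -
    have "0 \<notin> BA" using BA(2) dependent_zero by blast
    then show ?thesis using BA(1) BB(1) AB by blast
  qed
  have ind: "independent (BA \<union> BB)"
  proof
    assume "dependent (BA \<union> BB)"
    then obtain a where a: "a \<in> BA \<union> BB" and sp: "a \<in> span (BA \<union> BB - {a})"
      by (auto simp: dependent_def)
    show False
    proof (cases "a \<in> BA")
      case True
      then have "a \<notin> BB" using disj by blast
      then have "BA \<union> BB - {a} = (BA - {a}) \<union> BB" by blast
      with sp obtain x y where xy: "a = x + y" "x \<in> span (BA - {a})" "y \<in> span BB"
        by (auto simp: span_Un)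
      have "x \<in> A" using xy(2) spA span_mono[of "BA - {a}" BA] by blast
      moreover have "a \<in> A" using True BA(1) by blast
      ultimately have "y \<in> A" using xy(1) A by (metis add_diff_cancel_left' subspace_diff)
      moreover have "y \<in> B" using xy(3) spB by simp
      ultimately have "y = 0" using AB by blast
      then have "a \<in> span (BA - {a})" using xy by simp
      then show False using BA(2) True dependent_def by blast
    next
      case False
      then have aB: "a \<in> BB" using a by blast
      then have "BA \<union> BB - {a} = BA \<union> (BB - {a})" using False by blast
      with sp obtain x y where xy: "a = x + y" "x \<in> span BA" "y \<in> span (BB - {a})"
        by (auto simp: span_Un)
      have "y \<in> B" using xy(3) spB span_mono[of "BB - {a}" BB] by blast
      moreover have "a \<in> B" using aB BB(1) by blast
      ultimately have "x \<in> B" using xy(1) Bs by (metis add_diff_cancel_right' subspace_diff)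
      moreover have "x \<in> A" using xy(2) spA by simp
      ultimately have "x = 0" using AB by blast
      then have "a \<in> span (BB - {a})" using xy by simp
      then show False using BB(2) aB dependent_def by blast
    qed
  qed
  have "card (BA \<union> BB) = dim {a + b | a b. a \<in> A \<and> b \<in> B}"
  proof (rule basis_card_eq_dim)
    show "BA \<union> BB \<subseteq> {a + b |a b. a \<in> A \<and> b \<in> B}"
    proof
      fix x assume "x \<in> BA \<union> BB"
      then show "x \<in> {a + b |a b. a \<in> A \<and> b \<in> B}"
      proof
        assume "x \<in> BA" then have "x \<in> A" using BA by blast
        then show ?thesis using subspace_0[OF Bs] by force
      next
        assume "x \<in> BB" then have "x \<in> B" using BB by blast
        then show ?thesis using subspace_0[OF A] by force
      qed
    qed
    show "{a + b |a b. a \<in> A \<and> b \<in> B} \<subseteq> span (BA \<union> BB)"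
      using spA spB by (auto simp: span_Un)
    show "independent (BA \<union> BB)" by (rule ind)
  qed
  moreover have "card (BA \<union> BB) = card BA + card BB"
    using card_Un_disjoint[OF BA(5) BB(5) disj] .
  ultimately show ?thesis using BA(4) BB(4) by simp
qed

lemma subspace_lin_image:
  assumes add: "\<And>x y. f (x + y) = f x + f y" and sc: "\<And>c x. f (scale c x) = scale c (f x)"
    and S: "subspace S"
  shows "subspace (f ` S)"
proof -
  interpret h: module_hom scale scale f
    by unfold_locales (simp_all add: add sc)
  show ?thesis using h.subspace_image[OF S] .
qed

lemma dim_inj_image:
  assumes add: "\<And>x y. f (x + y) = f x + f y" and sc: "\<And>c x. f (scale c x) = scale c (f x)"
    and inj: "inj f" and W: "finite W" "V \<subseteq> span W"
  shows "dim (f ` V) = dim V"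
proof -
  interpret h: module_hom scale scale f
    by unfold_locales (simp_all add: add sc)
  obtain B where B: "B \<subseteq> V" "independent B" "V \<subseteq> span B" "card B = dim V" "finite B"
    using fin_basis[OF W] .
  have "card (f ` B) = dim (f ` V)"
  proof (rule basis_card_eq_dim)
    show "f ` B \<subseteq> f ` V" using B by blast
    show "f ` V \<subseteq> span (f ` B)" using B(3) h.span_image by blast
    show "independent (f ` B)"
      using h.independent_injective_image[OF B(2)] inj by (simp add: inj_on_def inj_def)
  qed
  moreover have "card (f ` B) = card B" using inj by (simp add: card_image inj_on_def inj_def)
  ultimately show ?thesis using B(4) by simp
qed

end

inductive_set gen :: "nat list \<Rightarrow> 'k::field mpoly set \<Rightarrow> 'k mpoly set" for w I where
  gen0: "0 \<in> gen w I"
| genm: "p \<in> I \<Longrightarrow> in_ring w q \<Longrightarrow> q * p \<in> gen w I"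
| gena: "a \<in> gen w I \<Longrightarrow> b \<in> gen w I \<Longrightarrow> a + b \<in> gen w I"

lemma gen_ring: assumes "I \<subseteq> {p. in_ring w p}" "a \<in> gen w I" shows "in_ring w a"
  using assms(2)
proof induction
  case gen0 then show ?case by (rule in_ring_0)
next
  case (genm p q) then show ?case using assms(1) in_ring_mult by blast
next
  case (gena a b) then show ?case using in_ring_add by blast
qed

lemma gen_mult: assumes "in_ring w r" "a \<in> gen w I" shows "r * a \<in> gen w I"
  using assms(2)
proof induction
  case gen0 then show ?case by (simp add: gen.gen0)
next
  case (genm p q)
  have "r * (q * p) = (r * q) * p" by (simp add: mult.assoc)
  then show ?case using genm assms(1) in_ring_mult gen.genm by metis
next
  case (gena a b) then show ?case by (simp add: distrib_left gen.gena)
qed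

lemma gen_sup: "p \<in> I \<Longrightarrow> p \<in> gen w I"
  using gen.genm[of p I w 1] in_ring_1[of w] by simp

lemma gen_ideal: assumes "I \<subseteq> {p. in_ring w p}" shows "ideal_in w (gen w I)"
  unfolding ideal_in_def
  using gen_ring[OF assms] gen_mult gen.gen0 gen.gena by blast

lemma gen_least: assumes "ideal_in w J" "I \<subseteq> J" "a \<in> gen w I" shows "a \<in> J"
  using assms(3)
proof induction
  case gen0 then show ?case using assms(1) by (simp add: ideal_in_def)
next
  case (genm p q) then show ?case using assms by (auto simp: ideal_in_def)
next
  case (gena a b) then show ?case using assms(1) by (simp add: ideal_in_def)
qed

lemma ext_ideal_gen: assumes "I \<subseteq> {p. in_ring w p}" shows "ext_ideal w I = gen w I"
proof
  show "ext_ideal w I \<subseteq> gen w I"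
    unfolding ext_ideal_def using gen_ideal[OF assms] gen_sup by blast
  show "gen w I \<subseteq> ext_ideal w I"
    unfolding ext_ideal_def using gen_least by blast
qed

lemma gen_struct:
  assumes I: "ideal_in w I" and a: "a \<in> gen (w @ [m]) I"
  shows "lowp (length w) a \<in> I \<and> shiftp (length w) a \<in> gen (w @ [m]) I"
  using a
proof induction
  case gen0 then show ?case using I by (simp add: ideal_in_def gen.gen0)
next
  case (genm p q)
  have pr: "in_ring w p" using genm(1) I by (auto simp: ideal_in_def)
  then have yf: "yfree (length w) p" by (rule in_ring_yfree)
  have "lowp (length w) (q * p) = lowp (length w) q * p" using yf by (rule lowp_mult)
  moreover have "in_ring w (lowp (length w) q)" using genm(2) by (rule in_ring_lowp)
  ultimately have "lowp (length w) (q * p) \<in> I" using I genm(1) by (simp add: ideal_in_def)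
  moreover have "shiftp (length w) (q * p) = shiftp (length w) q * p" using yf by (rule shiftp_mult)
  moreover have "in_ring (w @ [m]) (shiftp (length w) q)" using genm(2) by (rule in_ring_shiftp)
  ultimately show ?case using genm(1) gen.genm by metis
next
  case (gena a b)
  then show ?case using I by (simp add: lowp_add shiftp_add ideal_in_def gen.gena)
qed

lemma lk_le_wdeg: assumes "\<forall>x\<in>set w. 0 < x" "i < length w" shows "lk \<alpha> i \<le> wdeg w \<alpha>"
proof -
  have "0 < w ! i" using assms nth_mem by blast
  then have "lk \<alpha> i \<le> w ! i * lk \<alpha> i" by simp
  also have "\<dots> \<le> (\<Sum>j<length w. w ! j * lk \<alpha> j)"
    by (rule member_le_sum[where f = "\<lambda>j. w ! j * lk \<alpha> j"]) (use assms in auto)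
  finally show ?thesis by (simp add: wdeg_def)
qed

definition Mons :: "nat list \<Rightarrow> int \<Rightarrow> (nat \<Rightarrow>\<^sub>0 nat) set" where
  "Mons w t = {\<alpha>. (\<forall>i. lk \<alpha> i \<noteq> 0 \<longrightarrow> i < length w) \<and> int (wdeg w \<alpha>) = t}"

lemma finite_Mons: assumes "\<forall>x\<in>set w. 0 < x" shows "finite (Mons w t)"
proof -
  define B where "B = nat t"
  define L where "L = length w"
  let ?f = "\<lambda>\<alpha>::nat \<Rightarrow>\<^sub>0 nat. map (lk \<alpha>) [0..<L]"
  have inj: "inj_on ?f (Mons w t)"
  proof (rule inj_onI)
    fix a b assume a: "a \<in> Mons w t" and b: "b \<in> Mons w t" and e: "?f a = ?f b"
    show "a = b"
    proof (rule poly_mapping_eqI)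
      fix i show "lk a i = lk b i"
      proof (cases "i < L")
        case True
        then show ?thesis using e nth_map[of i "[0..<L]" "lk a"] nth_map[of i "[0..<L]" "lk b"] by simp
      next
        case False
        have "\<forall>i. lk a i \<noteq> 0 \<longrightarrow> i < length w" "\<forall>i. lk b i \<noteq> 0 \<longrightarrow> i < length w"
          using a b by (simp_all add: Mons_def)
        then have "lk a i = 0" "lk b i = 0" using False L_def by blast+
        then show ?thesis by simp
      qed
    qed
  qed
  have sub: "?f ` Mons w t \<subseteq> {xs. set xs \<subseteq> {0..B} \<and> length xs = L}"
  proof
    fix xs assume "xs \<in> ?f ` Mons w t"
    then obtain a where a: "a \<in> Mons w t" "xs = ?f a" by blast
    have "\<forall>i<L. lk a i \<le> B"
      using a(1) lk_le_wdeg[OF assms] by (auto simp: Mons_def B_def L_def)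
    then show "xs \<in> {xs. set xs \<subseteq> {0..B} \<and> length xs = L}" using a(2) by auto
  qed
  have "finite (?f ` Mons w t)"
    by (rule finite_subset[OF sub]) (rule finite_lists_length_eq, simp)
  then show ?thesis using finite_imageD[OF _ inj] by blast
qed

lemma pm_sum: "p = (\<Sum>\<alpha>\<in>ks p. pscale (lk p \<alpha>) (monom \<alpha>))"
proof (rule poly_mapping_eqI)
  fix \<beta>
  have "lk (\<Sum>\<alpha>\<in>ks p. pscale (lk p \<alpha>) (monom \<alpha>)) \<beta> = (\<Sum>\<alpha>\<in>ks p. if \<alpha> = \<beta> then lk p \<alpha> else 0)"
    by (simp add: lookup_sum lookup_pscale monom_def lookup_single when_def if_distrib cong: if_cong)
  also have "\<dots> = lk p \<beta>"
    by (simp add: in_keys_iff)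
  finally show "lk p \<beta> = lk (\<Sum>\<alpha>\<in>ks p. pscale (lk p \<alpha>) (monom \<alpha>)) \<beta>" by simp
qed

lemma gp_span: "graded_piece w t \<subseteq> pv.span (monom ` Mons w t)"
proof
  fix p :: "'k::field mpoly" assume p: "p \<in> graded_piece w t"
  have "(\<Sum>\<alpha>\<in>ks p. pscale (lk p \<alpha>) (monom \<alpha>)) \<in> pv.span (monom ` Mons w t)"
  proof (rule pv.span_sum)
    fix \<alpha> assume "\<alpha> \<in> ks p"
    then have "\<alpha> \<in> Mons w t" using p by (auto simp: gp_iff Mons_def in_ring_def)
    then show "pscale (lk p \<alpha>) (monom \<alpha>) \<in> pv.span (monom ` Mons w t)"
      by (intro pv.span_scale pv.span_base) blast
  qed
  then show "p \<in> pv.span (monom ` Mons w t)" using pm_sum[of p] by simp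
qed


lemma subspace_ideal: assumes "ideal_in w I" shows "pv.subspace I"
  unfolding pv.subspace_def
proof (intro conjI ballI allI)
  show "0 \<in> I" using assms by (simp add: ideal_in_def)
  fix x assume x: "x \<in> I"
  { fix y assume "y \<in> I" then show "x + y \<in> I" using assms x by (simp add: ideal_in_def) }
  fix c show "pscale c x \<in> I" using assms x in_ring_single0[of w c] by (simp add: ideal_in_def pscale_eq)
qed

lemma yfree_Y_zero: assumes "yfree n x" "x = Yv n * q" shows "x = 0"
proof -
  have "x = lowp n x" using assms(1) by (simp add: lowp_yfree)
  also have "\<dots> = 0" using assms(2) by (simp add: lowp_Y)
  finally show ?thesis .
qed

lemma hilb_rec:
  fixes I :: "'k::field mpoly set"
  assumes pos: "\<forall>x\<in>set w. 0 < x" "0 < m" and I: "ideal_in w I"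
  shows "hilb (w @ [m]) (gen (w @ [m]) I) t = hilb w I t + hilb (w @ [m]) (gen (w @ [m]) I) (t - int m)"
proof -
  define n where "n = length w"
  define w' where "w' = w @ [m]"
  define G where "G = gen w' I"
  define V :: "'k mpoly set" where "V = graded_piece w' t"
  define V0 :: "'k mpoly set" where "V0 = graded_piece w t"
  define V1 :: "'k mpoly set" where "V1 = graded_piece w' (t - int m)"
  define f :: "'k mpoly \<Rightarrow> 'k mpoly" where "f = (\<lambda>q. Yv n * q)"
  have pos': "\<forall>x\<in>set w'. 0 < x" using pos by (auto simp: w'_def)
  have Iring: "I \<subseteq> {p. in_ring w' p}"
    using I by (auto simp: ideal_in_def w'_def intro: in_ring_mono)
  have Gid: "ideal_in w' G" unfolding G_def by (rule gen_ideal[OF Iring])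
  have fadd: "\<And>x y. f (x + y) = f x + f y" by (simp add: f_def distrib_left)
  have fsc: "\<And>c x. f (pscale c x) = pscale c (f x)" by (simp add: f_def pscale_eq mult_ac)
  have finj: "inj f" by (rule injI) (metis f_def shiftp_Y)
  define W :: "'k mpoly set" where "W = monom ` Mons w' t"
  define W1 :: "'k mpoly set" where "W1 = monom ` Mons w' (t - int m)"
  have finW: "finite W" "finite W1" using finite_Mons[OF pos'] by (simp_all add: W_def W1_def)
  have VW: "V \<subseteq> pv.span W" unfolding V_def W_def by (rule gp_span)
  have V1W: "V1 \<subseteq> pv.span W1" unfolding V1_def W1_def by (rule gp_span)
  have V0V: "V0 \<subseteq> V" unfolding V0_def V_def w'_def using gp_sub by blast
  have fV1V: "f ` V1 \<subseteq> V" unfolding V1_def V_def w'_def f_def n_def using gp_Y by blast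
  have sV0: "pv.subspace V0" "pv.subspace V1" unfolding V0_def V1_def by (rule subspace_gp)+
  have sI: "pv.subspace I" by (rule subspace_ideal[OF I])
  have sG: "pv.subspace G" by (rule subspace_ideal[OF Gid])
  have sIV0: "pv.subspace (I \<inter> V0)" using sI sV0(1) by (rule pv.subspace_inter)
  have sGV1: "pv.subspace (G \<inter> V1)" using sG sV0(2) by (rule pv.subspace_inter)
  have sfV1: "pv.subspace (f ` V1)" using fadd fsc sV0(2) by (rule pv.subspace_lin_image)
  have sfGV1: "pv.subspace (f ` (G \<inter> V1))" using fadd fsc sGV1 by (rule pv.subspace_lin_image)
  have disj: "V0 \<inter> f ` X \<subseteq> {0}" for X
  proof
    fix x assume "x \<in> V0 \<inter> f ` X"
    then obtain q where "x \<in> V0" "x = Yv n * q" by (auto simp: f_def)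
    moreover have "yfree n x" using \<open>x \<in> V0\<close> in_ring_yfree by (auto simp: V0_def gp_iff n_def)
    ultimately show "x \<in> {0}" using yfree_Y_zero by blast
  qed
  have E1: "V = {a + b | a b. a \<in> V0 \<and> b \<in> f ` V1}"
  proof
    show "V \<subseteq> {a + b | a b. a \<in> V0 \<and> b \<in> f ` V1}"
    proof
      fix p assume p: "p \<in> V"
      have "p = lowp n p + f (shiftp n p)" unfolding f_def by (rule decomp)
      moreover have "lowp n p \<in> V0" using p gp_lowp by (simp add: V_def V0_def w'_def n_def)
      moreover have "shiftp n p \<in> V1" using p gp_shiftp by (simp add: V_def V1_def w'_def n_def)
      ultimately show "p \<in> {a + b | a b. a \<in> V0 \<and> b \<in> f ` V1}" by blast
    qed
    show "{a + b | a b. a \<in> V0 \<and> b \<in> f ` V1} \<subseteq> V"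
      using V0V fV1V gp_add by (force simp: V_def)
  qed
  have E2: "G \<inter> V = {a + b | a b. a \<in> I \<inter> V0 \<and> b \<in> f ` (G \<inter> V1)}"
  proof
    show "G \<inter> V \<subseteq> {a + b | a b. a \<in> I \<inter> V0 \<and> b \<in> f ` (G \<inter> V1)}"
    proof
      fix p assume p: "p \<in> G \<inter> V"
      then have pV: "p \<in> V" by blast
      have "p = lowp n p + f (shiftp n p)" unfolding f_def by (rule decomp)
      moreover have "lowp n p \<in> V0" using pV gp_lowp by (simp add: V_def V0_def w'_def n_def)
      moreover have "shiftp n p \<in> V1" using pV gp_shiftp by (simp add: V_def V1_def w'_def n_def)
      moreover have "lowp n p \<in> I \<and> shiftp n p \<in> G"
        using gen_struct[OF I, of p m] p by (simp add: G_def w'_def n_def)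
      ultimately show "p \<in> {a + b | a b. a \<in> I \<inter> V0 \<and> b \<in> f ` (G \<inter> V1)}" by blast
    qed
    show "{a + b | a b. a \<in> I \<inter> V0 \<and> b \<in> f ` (G \<inter> V1)} \<subseteq> G \<inter> V"
    proof
      fix x assume "x \<in> {a + b | a b. a \<in> I \<inter> V0 \<and> b \<in> f ` (G \<inter> V1)}"
      then obtain a q where x: "x = a + f q" "a \<in> I" "a \<in> V0" "q \<in> G" "q \<in> V1" by blast
      have "a \<in> G" using x(2) gen_sup by (simp add: G_def)
      moreover have "f q \<in> G" using x(4) Gid in_ring_Y[of w m] unfolding f_def ideal_in_def n_def w'_def by blast
      ultimately have "x \<in> G" using x(1) Gid by (simp add: ideal_in_def)
      moreover have "x \<in> V" using x V0V fV1V gp_add by (force simp: V_def)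
      ultimately show "x \<in> G \<inter> V" by blast
    qed
  qed
  have d1: "pv.dim V = pv.dim V0 + pv.dim (f ` V1)"
    unfolding E1 by (rule pv.dim_direct_sum[OF sV0(1) sfV1 disj finW(1)]) (use VW V0V fV1V in auto)
  have d2: "pv.dim (f ` V1) = pv.dim V1"
    by (rule pv.dim_inj_image[OF fadd fsc finj finW(2) V1W])
  have d3: "pv.dim (G \<inter> V) = pv.dim (I \<inter> V0) + pv.dim (f ` (G \<inter> V1))"
    unfolding E2 by (rule pv.dim_direct_sum[OF sIV0 sfGV1 _ finW(1)]) (use VW V0V fV1V disj in blast)+
  have d4: "pv.dim (f ` (G \<inter> V1)) = pv.dim (G \<inter> V1)"
    by (rule pv.dim_inj_image[OF fadd fsc finj finW(2)]) (use V1W in auto)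
  have le1: "pv.dim (I \<inter> V0) \<le> pv.dim V0"
    by (rule pv.dim_le_sub[OF finW(1)]) (use VW V0V in auto)
  have le2: "pv.dim (G \<inter> V1) \<le> pv.dim V1"
    by (rule pv.dim_le_sub[OF finW(2) V1W]) auto
  have "hilb w' G t = pv.dim V - pv.dim (G \<inter> V)"
    by (simp add: hilb_def kdim_eq V_def)
  also have "\<dots> = (pv.dim V0 - pv.dim (I \<inter> V0)) + (pv.dim V1 - pv.dim (G \<inter> V1))"
    using d1 d2 d3 d4 le1 le2 by simp
  also have "\<dots> = hilb w I t + hilb w' G (t - int m)"
    by (simp add: hilb_def kdim_eq V0_def V1_def)
  finally show ?thesis by (simp add: G_def w'_def)
qed

lemma binom_diff:
  "((of_nat j::rat) + 1) ^ Suc i - (of_nat j) ^ Suc i =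
     (\<Sum>k\<le>i. of_nat (Suc i choose k) * (of_nat j) ^ k)"
proof -
  have "((of_nat j::rat) + 1) ^ Suc i = (\<Sum>k\<le>Suc i. of_nat (Suc i choose k) * (of_nat j) ^ k * 1 ^ (Suc i - k))"
    by (rule binomial_ring)
  also have "\<dots> = (\<Sum>k\<le>i. of_nat (Suc i choose k) * (of_nat j) ^ k) + (of_nat j) ^ Suc i"
    by (simp add: sum.atMost_Suc)
  finally show ?thesis by simp
qed

lemma power_sum_identity:
  "((of_nat N::rat) + 1) ^ Suc i = (\<Sum>k\<le>i. of_nat (Suc i choose k) * (\<Sum>j\<le>N. (of_nat j) ^ k))"
proof -
  have "((of_nat N::rat) + 1) ^ Suc i = (\<Sum>j<Suc N. (of_nat (Suc j)::rat) ^ Suc i - (of_nat j) ^ Suc i)"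
    by (subst sum_lessThan_telescope[where f = "\<lambda>j. (of_nat j::rat) ^ Suc i"]) (simp add: add.commute)
  also have "\<dots> = (\<Sum>j\<le>N. \<Sum>k\<le>i. of_nat (Suc i choose k) * (of_nat j) ^ k)"
    using binom_diff by (simp add: lessThan_Suc_atMost add.commute)
  also have "\<dots> = (\<Sum>k\<le>i. \<Sum>j\<le>N. of_nat (Suc i choose k) * (of_nat j) ^ k)"
    by (rule sum.swap)
  also have "\<dots> = (\<Sum>k\<le>i. of_nat (Suc i choose k) * (\<Sum>j\<le>N. (of_nat j) ^ k))"
    by (simp add: sum_distrib_left)
  finally show ?thesis .
qed

lemma power_sum_poly:
  "\<exists>S::rat poly. degree S \<le> Suc i \<and> coeff S (Suc i) = 1 / of_nat (Suc i) \<and>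
     (\<forall>N. poly S (of_nat N) = (\<Sum>j\<le>N. (of_nat j) ^ i))"
proof (induction i rule: less_induct)
  case (less i)
  define P where "P = (\<lambda>k (S::rat poly). degree S \<le> Suc k \<and> coeff S (Suc k) = 1 / of_nat (Suc k) \<and>
     (\<forall>N. poly S (of_nat N) = (\<Sum>j\<le>N. (of_nat j) ^ k)))"
  have "\<forall>k. \<exists>S. k < i \<longrightarrow> P k S" using less by (auto simp: P_def)
  from choice[OF this] obtain Sf where Sf0: "\<forall>k. k < i \<longrightarrow> P k (Sf k)" by blast
  then have Sf: "\<And>k. k < i \<Longrightarrow> P k (Sf k)" by blast
  define T where "T = [:1,1:] ^ Suc i - (\<Sum>k<i. smult (of_nat (Suc i choose k)) (Sf k))"
  define S where "S = smult (1 / of_nat (Suc i)) T"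
  have dsum: "degree (\<Sum>k<i. smult (of_nat (Suc i choose k)) (Sf k)) \<le> i"
  proof (rule degree_sum_le)
    fix k assume "k \<in> {..<i}"
    then have "degree (Sf k) \<le> Suc k" "Suc k \<le> i" using Sf[of k] by (auto simp: P_def)
    then show "degree (smult (of_nat (Suc i choose k)) (Sf k)) \<le> i"
      using degree_smult_le[of "of_nat (Suc i choose k)" "Sf k"] by linarith
  qed simp
  have dT: "degree T \<le> Suc i"
    unfolding T_def by (rule degree_diff_le) (simp only: degree_linear_power, use dsum in linarith)
  have csum: "coeff (\<Sum>k<i. smult (of_nat (Suc i choose k)) (Sf k)) (Suc i) = 0"
    using dsum by (intro coeff_eq_0) simp
  have cT: "coeff T (Suc i) = 1"
    unfolding T_def using csum coeff_linear_power[of 1 "Suc i"] by simp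
  have pT: "poly T (of_nat N) = of_nat (Suc i) * (\<Sum>j\<le>N. (of_nat j) ^ i)" for N
  proof -
    define F where "F = (\<lambda>k. of_nat (Suc i choose k) * (\<Sum>j\<le>N. (of_nat j::rat) ^ k))"
    have "poly T (of_nat N) = ((of_nat N::rat) + 1) ^ Suc i - (\<Sum>k<i. F k)"
    proof -
      have "\<And>k. k \<in> {..<i} \<Longrightarrow> poly (smult (of_nat (Suc i choose k)) (Sf k)) (of_nat N) = F k"
        using Sf by (simp add: P_def F_def)
      then have "poly (\<Sum>k<i. smult (of_nat (Suc i choose k)) (Sf k)) (of_nat N) = (\<Sum>k<i. F k)"
        unfolding poly_sum by (rule sum.cong[OF refl])
      moreover have "poly ([:1,1:] ^ Suc i) (of_nat N) = ((of_nat N::rat) + 1) ^ Suc i"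
        by (simp only: poly_power) (simp add: add.commute)
      ultimately show ?thesis unfolding T_def poly_diff by simp
    qed
    also have "((of_nat N::rat) + 1) ^ Suc i = (\<Sum>k<i. F k) + F i"
      unfolding power_sum_identity F_def by (simp add: lessThan_Suc_atMost[symmetric])
    finally show ?thesis by (simp add: F_def)
  qed
  have "P i S"
  proof -
    have "degree S \<le> Suc i" unfolding S_def using dT degree_smult_le[of _ T] order.trans by blast
    moreover have "coeff S (Suc i) = 1 / of_nat (Suc i)" using cT by (simp add: S_def)
    moreover have "\<forall>N. poly S (of_nat N) = (\<Sum>j\<le>N. (of_nat j) ^ i)" using pT by (simp add: S_def)
    ultimately show ?thesis by (simp add: P_def)
  qed
  then show ?case by (auto simp: P_def)
qed

lemma sum_poly:
  fixes g :: "rat poly"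
  assumes "degree g \<le> d"
  shows "\<exists>R. degree R \<le> Suc d \<and> coeff R (Suc d) = coeff g d / of_nat (Suc d) \<and>
     (\<forall>N. poly R (of_nat N) = (\<Sum>j\<le>N. poly g (of_nat j)))"
proof -
  have "\<forall>i. \<exists>S::rat poly. degree S \<le> Suc i \<and> coeff S (Suc i) = 1 / of_nat (Suc i) \<and>
     (\<forall>N. poly S (of_nat N) = (\<Sum>j\<le>N. (of_nat j) ^ i))" using power_sum_poly by blast
  from choice[OF this] obtain Sf :: "nat \<Rightarrow> rat poly" where Sf0: "\<forall>i. degree (Sf i) \<le> Suc i \<and> coeff (Sf i) (Suc i) = 1 / of_nat (Suc i) \<and>
     (\<forall>N. poly (Sf i) (of_nat N) = (\<Sum>j\<le>N. (of_nat j) ^ i))" by blast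
  then have Sf: "\<And>i. degree (Sf i) \<le> Suc i" "\<And>i. coeff (Sf i) (Suc i) = 1 / of_nat (Suc i)"
    "\<And>i N. poly (Sf i) (of_nat N) = (\<Sum>j\<le>N. (of_nat j) ^ i)" by blast+
  define R where "R = (\<Sum>i\<le>d. smult (coeff g i) (Sf i))"
  have "degree R \<le> Suc d"
    unfolding R_def
  proof (rule degree_sum_le)
    fix i assume "i \<in> {..d}"
    then show "degree (smult (coeff g i) (Sf i)) \<le> Suc d"
      using Sf(1)[of i] degree_smult_le[of _ "Sf i"] by auto
  qed simp
  moreover have "coeff R (Suc d) = coeff g d / of_nat (Suc d)"
  proof -
    have "coeff R (Suc d) = (\<Sum>i\<le>d. coeff g i * coeff (Sf i) (Suc d))"
      by (simp add: R_def coeff_sum)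
    also have "\<dots> = (\<Sum>i\<in>{d}. coeff g i * coeff (Sf i) (Suc d))"
    proof (rule sum.mono_neutral_right)
      show "\<forall>i\<in>{..d} - {d}. coeff g i * coeff (Sf i) (Suc d) = 0"
      proof
        fix i assume "i \<in> {..d} - {d}"
        then have "degree (Sf i) < Suc d" using Sf(1)[of i] by auto
        then show "coeff g i * coeff (Sf i) (Suc d) = 0" by (simp add: coeff_eq_0)
      qed
    qed auto
    also have "\<dots> = coeff g d / of_nat (Suc d)" using Sf(2)[of d] by simp
    finally show ?thesis .
  qed
  moreover have "poly R (of_nat N) = (\<Sum>j\<le>N. poly g (of_nat j))" for N
  proof -
    have "poly R (of_nat N) = (\<Sum>i\<le>d. coeff g i * (\<Sum>j\<le>N. (of_nat j) ^ i))"
      by (simp add: R_def poly_sum Sf(3))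
    also have "\<dots> = (\<Sum>i\<le>d. \<Sum>j\<le>N. coeff g i * (of_nat j) ^ i)"
      by (simp add: sum_distrib_left)
    also have "\<dots> = (\<Sum>j\<le>N. \<Sum>i\<le>d. coeff g i * (of_nat j) ^ i)"
      by (rule sum.swap)
    also have "\<dots> = (\<Sum>j\<le>N. poly g (of_nat j))"
    proof (rule sum.cong[OF refl])
      fix j
      have "poly g (of_nat j) = (\<Sum>i\<le>degree g. coeff g i * (of_nat j) ^ i)" by (rule poly_altdef)
      also have "\<dots> = (\<Sum>i\<le>d. coeff g i * (of_nat j) ^ i)"
        by (rule sum.mono_neutral_left) (use assms in \<open>auto simp: coeff_eq_0\<close>)
      finally show "(\<Sum>i\<le>d. coeff g i * (of_nat j) ^ i) = poly g (of_nat j)" by simp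
    qed
    finally show ?thesis .
  qed
  ultimately show ?thesis by blast
qed

lemma poly_pinfty_gt_lc':
  fixes p :: "'a::linordered_field poly"
  assumes "lead_coeff p > 0"
  shows "\<exists>n. \<forall> x \<ge> n. poly p x \<ge> lead_coeff p"
  using assms
proof (induct p)
  case 0
  then show ?case by auto
next
  case (pCons a p)
  from this(1) consider "a \<noteq> 0" "p = 0" | "p \<noteq> 0" by auto
  then show ?case
  proof cases
    case 1
    then show ?thesis by auto
  next
    case 2
    with pCons obtain n1 where gte_lcoeff: "\<forall>x\<ge>n1. lead_coeff p \<le> poly p x"
      by auto
    from pCons(3) \<open>p \<noteq> 0\<close> have gt_0: "lead_coeff p > 0" by auto
    define n where "n = max n1 (1 + \<bar>a\<bar> / lead_coeff p)"
    have "lead_coeff (pCons a p) \<le> poly (pCons a p) x" if "n \<le> x" for x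
    proof -
      from gte_lcoeff that have "lead_coeff p \<le> poly p x"
        by (auto simp: n_def)
      with gt_0 have "\<bar>a\<bar> / lead_coeff p \<ge> \<bar>a\<bar> / poly p x" and "poly p x > 0"
        by (auto intro: frac_le)
      with \<open>n \<le> x\<close>[unfolded n_def] have "x \<ge> 1 + \<bar>a\<bar> / poly p x"
        by auto
      with \<open>lead_coeff p \<le> poly p x\<close> \<open>poly p x > 0\<close> \<open>p \<noteq> 0\<close>
      show "lead_coeff (pCons a p) \<le> poly (pCons a p) x"
        by (auto simp: field_simps)
    qed
    then show ?thesis by blast
  qed
qed

lemma coeff_lin_power: assumes "(s::rat) \<noteq> 0" shows "coeff ([:b, s:] ^ n) n = s ^ n"
proof -
  have "degree ([:b, s:] ^ n) = n" using assms by (simp add: degree_power_eq)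
  then have "coeff ([:b, s:] ^ n) n = lead_coeff ([:b, s:] ^ n)" by simp
  also have "\<dots> = s ^ n" using assms by (simp add: lead_coeff_power)
  finally show ?thesis .
qed

lemma degree_lin_power: "degree ([:b, s:] ^ n) \<le> n"
proof -
  have "degree ([:b, s:] ^ n) \<le> degree [:b, s:] * n" by (rule degree_power_le)
  also have "\<dots> \<le> 1 * n" by (intro mult_le_mono1) simp
  finally show ?thesis by simp
qed

lemma coeff_pcompose_top:
  fixes p :: "rat poly" assumes "degree p \<le> n" "b \<noteq> 0"
  shows "coeff (pcompose p [:a, b:]) n = coeff p n * b ^ n"
proof (cases "degree p = n")
  case True
  have "degree (pcompose p [:a, b:]) = n" using True assms(2) by (simp add: degree_pcompose)
  then have "coeff (pcompose p [:a, b:]) n = lead_coeff (pcompose p [:a, b:])" by simp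
  also have "\<dots> = lead_coeff p * lead_coeff [:a, b:] ^ degree p"
    by (rule lead_coeff_comp) (use assms(2) in simp)
  finally show ?thesis using True assms(2) by simp
next
  case False
  then have lt: "degree p < n" using assms(1) by simp
  have "degree (pcompose p [:a, b:]) \<le> degree p * degree [:a, b:]" by (rule degree_pcompose_le)
  also have "\<dots> \<le> degree p" using assms(2) by simp
  finally have "degree (pcompose p [:a, b:]) < n" using lt by simp
  then show ?thesis using lt by (simp add: coeff_eq_0)
qed

lemma poly_eq_inf:
  fixes p p' :: "rat poly"
  assumes "0 < s" "\<And>k::nat. poly p (of_int (r + int (K + k) * s)) = poly p' (of_int (r + int (K + k) * s))"
  shows "p = p'"
proof (rule ccontr)
  assume "p \<noteq> p'"
  then have "p - p' \<noteq> 0" by simp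
  then have fin: "finite {x. poly (p - p') x = 0}" by (rule poly_roots_finite)
  define f where "f = (\<lambda>k::nat. (of_int (r + int (K + k) * s) :: rat))"
  have "inj f" unfolding f_def using assms(1) by (auto simp: inj_def)
  then have "infinite (range f)" by (rule range_inj_infinite)
  moreover have "range f \<subseteq> {x. poly (p - p') x = 0}" using assms(2) by (auto simp: f_def)
  ultimately show False using fin finite_subset by blast
qed

locale qsetup =
  fixes H H' :: "int \<Rightarrow> rat" and q m d :: nat and c :: "nat \<Rightarrow> int \<Rightarrow> rat" and t0 :: int
  assumes q_pos: "0 < q" and m_pos: "0 < m"
    and rec: "\<And>t. H' t = H t + H' (t - int m)"
    and per: "\<And>i t. i \<le> d \<Longrightarrow> c i (t + int q) = c i t"
    and agree: "\<And>t. t0 \<le> t \<Longrightarrow> H t = (\<Sum>i\<le>d. c i t * of_int t ^ i)"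
    and Hnn: "\<And>t. 0 \<le> H t"
    and cd_nz: "c d \<noteq> (\<lambda>_. 0)"
begin

definition qq :: nat where "qq = lcm q m"
definition MM :: nat where "MM = qq div m"

lemma qq_pos: "0 < qq"
  using q_pos m_pos by (simp add: qq_def lcm_pos_nat)

lemma MM_m: "MM * m = qq"
  by (simp add: MM_def qq_def)

lemma MM_pos: "0 < MM"
proof (rule ccontr)
  assume "\<not> 0 < MM"
  then have "MM = 0" by simp
  then show False using MM_m qq_pos by simp
qed

lemma q_dvd_qq: "q dvd qq"
  by (simp add: qq_def)

lemma per_nat: "i \<le> d \<Longrightarrow> c i (t + int n * int q) = c i t"
proof (induction n arbitrary: t)
  case 0 then show ?case by simp
next
  case (Suc n)
  have "c i (t + int (Suc n) * int q) = c i ((t + int n * int q) + int q)" by (simp add: algebra_simps)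
  also have "\<dots> = c i (t + int n * int q)" using per Suc by blast
  finally show ?case using Suc by simp
qed

lemma per_int: assumes "i \<le> d" shows "c i (t + k * int q) = c i t"
proof (cases "0 \<le> k")
  case True
  then show ?thesis using per_nat[OF assms, of t "nat k"] by simp
next
  case False
  define n where "n = nat (- k)"
  have n: "k = - int n" using False by (simp add: n_def)
  have "c i (t + k * int q) = c i ((t + k * int q) + int n * int q)"
    using per_nat[OF assms] by simp
  also have "\<dots> = c i t" using n by simp
  finally show ?thesis .
qed

lemma per_qq: assumes "i \<le> d" shows "c i (t + k * int qq) = c i t"
proof -
  obtain e where e: "qq = q * e" using q_dvd_qq by blast
  have "c i (t + k * int qq) = c i (t + (k * int e) * int q)" using e by (simp add: algebra_simps)
  also have "\<dots> = c i t" by (rule per_int[OF assms])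
  finally show ?thesis .
qed

lemma iter: "H' t = (\<Sum>a<k. H (t - int a * int m)) + H' (t - int k * int m)"
proof (induction k)
  case 0 then show ?case by simp
next
  case (Suc k)
  have "H' (t - int k * int m) = H (t - int k * int m) + H' (t - int (Suc k) * int m)"
    using rec[of "t - int k * int m"] by (simp add: algebra_simps)
  then show ?case using Suc by simp
qed

definition G :: "int \<Rightarrow> rat" where "G t = (\<Sum>a<MM. H (t - int a * int m))"

lemma recG: "H' t = G t + H' (t - int qq)"
proof -
  have "int MM * int m = int qq" using MM_m by (simp flip: of_nat_mult)
  then show ?thesis using iter[of t MM] by (simp add: G_def)
qed

lemma prog: "H' (r + int N * int qq) = H' r + (\<Sum>j\<in>{1..N}. G (r + int j * int qq))"
proof (induction N)
  case 0 then show ?case by simp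
next
  case (Suc N)
  have "H' (r + int (Suc N) * int qq) = G (r + int (Suc N) * int qq) + H' (r + int N * int qq)"
    using recG[of "r + int (Suc N) * int qq"] by (simp add: algebra_simps)
  then show ?case using Suc by (simp add: add.commute)
qed

definition gpoly :: "int \<Rightarrow> rat poly" where
  "gpoly r = (\<Sum>a<MM. \<Sum>i\<le>d. smult (c i (r - int a * int m)) ([:of_int (r - int a * int m), of_nat qq:] ^ i))"

lemma gpoly_eval:
  assumes "t0 + int qq \<le> r + int j * int qq"
  shows "G (r + int j * int qq) = poly (gpoly r) (of_nat j)"
  unfolding G_def gpoly_def poly_sum
proof (rule sum.cong[OF refl])
  fix a assume a: "a \<in> {..<MM}"
  then have "int a * int m < int qq" using MM_m m_pos
    by (metis of_nat_less_iff of_nat_mult mult_less_cancel2 lessThan_iff)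
  then have t0le: "t0 \<le> r + int j * int qq - int a * int m" using assms by linarith
  have "H (r + int j * int qq - int a * int m) =
      (\<Sum>i\<le>d. c i (r + int j * int qq - int a * int m) * of_int (r + int j * int qq - int a * int m) ^ i)"
    by (rule agree[OF t0le])
  also have "\<dots> = (\<Sum>i\<le>d. poly (smult (c i (r - int a * int m)) ([:of_int (r - int a * int m), of_nat qq:] ^ i)) (of_nat j))"
  proof (rule sum.cong[OF refl])
    fix i assume "i \<in> {..d}"
    then have "c i ((r - int a * int m) + int j * int qq) = c i (r - int a * int m)"
      by (intro per_qq) simp
    moreover have "r + int j * int qq - int a * int m = (r - int a * int m) + int j * int qq" by simp
    moreover have "poly [:of_int (r - int a * int m), of_nat qq:] (of_nat j) = (of_int (r + int j * int qq - int a * int m) :: rat)"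
      by simp
    ultimately show "c i (r + int j * int qq - int a * int m) * of_int (r + int j * int qq - int a * int m) ^ i =
        poly (smult (c i (r - int a * int m)) ([:of_int (r - int a * int m), of_nat qq:] ^ i)) (of_nat j)"
      by (simp only: poly_smult poly_power)
  qed
  finally show "H (r + int j * int qq - int a * int m) =
      (\<Sum>i\<le>d. poly (smult (c i (r - int a * int m)) ([:of_int (r - int a * int m), of_nat qq:] ^ i)) (of_nat j))" .
qed

lemma gpoly_degree: "degree (gpoly r) \<le> d"
  unfolding gpoly_def
proof (intro degree_sum_le)
  fix a i assume "i \<in> {..d}"
  have "degree (smult (c i (r - int a * int m)) ([:of_int (r - int a * int m), of_nat qq:] ^ i))
      \<le> degree ([:of_int (r - int a * int m), of_nat qq:] ^ i :: rat poly)" by (rule degree_smult_le)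
  also have "\<dots> \<le> i" by (rule degree_lin_power)
  also have "i \<le> d" using \<open>i \<in> {..d}\<close> by simp
  finally show "degree (smult (c i (r - int a * int m)) ([:of_int (r - int a * int m), of_nat qq:] ^ i)) \<le> d" .
qed auto

lemma gpoly_coeff: "coeff (gpoly r) d = of_nat qq ^ d * (\<Sum>a<MM. c d (r - int a * int m))"
proof -
  have "coeff (gpoly r) d = (\<Sum>a<MM. \<Sum>i\<le>d. c i (r - int a * int m) * coeff ([:of_int (r - int a * int m), of_nat qq:] ^ i) d)"
    by (simp add: gpoly_def coeff_sum)
  also have "\<dots> = (\<Sum>a<MM. c d (r - int a * int m) * of_nat qq ^ d)"
  proof (rule sum.cong[OF refl])
    fix a
    have "(\<Sum>i\<le>d. c i (r - int a * int m) * coeff ([:of_int (r - int a * int m), of_nat qq:] ^ i) d) =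
        (\<Sum>i\<in>{d}. c i (r - int a * int m) * coeff ([:of_int (r - int a * int m), of_nat qq:] ^ i) d)"
    proof (rule sum.mono_neutral_right)
      show "\<forall>i\<in>{..d} - {d}. c i (r - int a * int m) * coeff ([:of_int (r - int a * int m), of_nat qq:] ^ i) d = 0"
      proof
        fix i assume "i \<in> {..d} - {d}"
        then have "i < d" by auto
        then have "degree ([:of_int (r - int a * int m), of_nat qq:] ^ i :: rat poly) < d"
          using degree_lin_power[of "of_int (r - int a * int m) :: rat" "of_nat qq" i] by linarith
        then have "coeff ([:of_int (r - int a * int m), of_nat qq:] ^ i :: rat poly) d = 0" by (rule coeff_eq_0)
        then show "c i (r - int a * int m) * coeff ([:of_int (r - int a * int m), of_nat qq:] ^ i) d = 0"
          by (simp only: mult_zero_right)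
      qed
    qed auto
    also have "\<dots> = c d (r - int a * int m) * of_nat qq ^ d"
    proof -
      have "coeff ([:of_int (r - int a * int m), of_nat qq:] ^ d :: rat poly) d = of_nat qq ^ d"
        using coeff_lin_power[of "of_nat qq" "of_int (r - int a * int m)" d] qq_pos by simp
      then show ?thesis by simp
    qed
    finally show "(\<Sum>i\<le>d. c i (r - int a * int m) * coeff ([:of_int (r - int a * int m), of_nat qq:] ^ i) d) =
        c d (r - int a * int m) * of_nat qq ^ d" .
  qed
  also have "\<dots> = of_nat qq ^ d * (\<Sum>a<MM. c d (r - int a * int m))"
    by (simp add: sum_distrib_left mult.commute)
  finally show ?thesis .
qed

end

context qsetup begin

lemma resid_poly:
  "\<exists>P T. degree P \<le> Suc d \<and>
     coeff P (Suc d) = (\<Sum>a<MM. c d (r - int a * int m)) / (of_nat qq * of_nat (Suc d)) \<and>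
     (\<forall>t. T \<le> t \<longrightarrow> t mod int qq = r mod int qq \<longrightarrow> H' t = poly P (of_int t))"
proof -
  obtain R where R: "degree R \<le> Suc d" "coeff R (Suc d) = coeff (gpoly r) d / of_nat (Suc d)"
    "\<And>N. poly R (of_nat N) = (\<Sum>j\<le>N. poly (gpoly r) (of_nat j))"
    using sum_poly[OF gpoly_degree[of r]] by blast
  define N0 where "N0 = nat (t0 + int qq - r)"
  define D where "D = (\<lambda>j. G (r + int j * int qq) - poly (gpoly r) (of_nat j))"
  have D0: "D j = 0" if "N0 \<le> j" for j
  proof -
    have "int j * 1 \<le> int j * int qq" by (rule mult_left_mono) (use qq_pos in auto)
    moreover have "t0 + int qq - r \<le> int j" using that by (simp add: N0_def)
    ultimately have "t0 + int qq \<le> r + int j * int qq" by linarith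
    then show ?thesis by (simp add: D_def gpoly_eval)
  qed
  define K where "K = H' r - poly (gpoly r) 0 + (\<Sum>j\<in>{1..N0}. D j)"
  have HN: "H' (r + int N * int qq) = poly R (of_nat N) + K" if "N0 \<le> N" for N
  proof -
    have s1: "(\<Sum>j\<in>{1..N}. G (r + int j * int qq)) =
        (\<Sum>j\<in>{1..N}. poly (gpoly r) (of_nat j)) + (\<Sum>j\<in>{1..N}. D j)"
      by (simp add: D_def sum.distrib[symmetric])
    have "{..N} = insert 0 {1..N}" by auto
    then have s2: "(\<Sum>j\<le>N. poly (gpoly r) (of_nat j)) = poly (gpoly r) 0 + (\<Sum>j\<in>{1..N}. poly (gpoly r) (of_nat j))"
      by simp
    have s3: "(\<Sum>j\<in>{1..N}. D j) = (\<Sum>j\<in>{1..N0}. D j)"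
      by (rule sum.mono_neutral_right) (use that D0 in auto)
    show ?thesis using prog[of r N] s1 s2 s3 R(3)[of N] by (simp add: K_def)
  qed
  define P where "P = pcompose (R + [:K:]) [:- of_int r / of_nat qq, 1 / of_nat qq:]"
  define T where "T = r + int N0 * int qq"
  have qq0: "(of_nat qq :: rat) \<noteq> 0" using qq_pos by simp
  have "degree (R + [:K:]) \<le> Suc d" using R(1) by (intro degree_add_le) auto
  then have dP: "degree P \<le> Suc d"
    unfolding P_def using degree_pcompose_le[of "R + [:K:]" "[:- of_int r / of_nat qq, 1 / of_nat qq:]"] qq0
    by simp
  have "coeff P (Suc d) = coeff (R + [:K:]) (Suc d) * (1 / of_nat qq) ^ Suc d"
    unfolding P_def by (rule coeff_pcompose_top) (use \<open>degree (R + [:K:]) \<le> Suc d\<close> qq0 in auto)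
  also have "coeff (R + [:K:]) (Suc d) = coeff R (Suc d)" by simp
  also have "\<dots> = of_nat qq ^ d * (\<Sum>a<MM. c d (r - int a * int m)) / of_nat (Suc d)"
    using R(2) gpoly_coeff by simp
  finally have cP: "coeff P (Suc d) = (\<Sum>a<MM. c d (r - int a * int m)) / (of_nat qq * of_nat (Suc d))"
    using qq0 by (simp add: field_simps power_Suc)
  have "H' t = poly P (of_int t)" if t: "T \<le> t" "t mod int qq = r mod int qq" for t
  proof -
    have "int qq dvd t - r" using t(2) by (simp add: mod_eq_dvd_iff)
    then obtain k where k: "t - r = int qq * k" by blast
    have "int qq * int N0 \<le> int qq * k" using t(1) k by (simp add: T_def mult.commute)
    then have kN0: "int N0 \<le> k" using qq_pos by simp
    define N where "N = nat k"
    have tN: "t = r + int N * int qq" using k kN0 by (simp add: N_def mult.commute)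
    have "N0 \<le> N" using kN0 by (simp add: N_def)
    then have "H' t = poly R (of_nat N) + K" using HN tN by simp
    moreover have "- of_int r / of_nat qq + of_int t * (1 / of_nat qq) = (of_nat N :: rat)"
      using tN qq0 by (simp add: field_simps)
    ultimately show ?thesis by (simp add: P_def poly_pcompose)
  qed
  then show ?thesis using dP cP by blast
qed

lemma cd_nonneg: "0 \<le> c d x"
proof (rule ccontr)
  assume neg: "\<not> 0 \<le> c d x"
  define p :: "rat poly" where "p = (\<Sum>i\<le>d. Polynomial.monom (c i x) i)"
  have cp: "coeff p i = (if i \<le> d then c i x else 0)" for i
    by (simp add: p_def coeff_sum coeff_monom)
  have "degree p \<le> d" unfolding p_def by (intro degree_sum_le) (auto intro: order.trans[OF degree_monom_le])
  moreover have "coeff p d \<noteq> 0" using neg cp by simp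
  ultimately have dp: "degree p = d" by (simp add: le_antisym le_degree)
  then have lc: "lead_coeff (- p) = - c d x" using cp by simp
  then have "0 < lead_coeff (- p)" using neg by simp
  then obtain n where n: "\<And>y. n \<le> y \<Longrightarrow> lead_coeff (- p) \<le> poly (- p) y"
    using poly_pinfty_gt_lc' by blast
  define k where "k = nat (max (t0 - x) (\<lceil>n\<rceil> - x))"
  define t where "t = x + int k * int q"
  have "int k * 1 \<le> int k * int q" by (rule mult_left_mono) (use q_pos in auto)
  then have tge: "t0 \<le> t" "\<lceil>n\<rceil> \<le> t" by (auto simp: t_def k_def)
  then have "n \<le> of_int t" by linarith
  then have "lead_coeff (- p) \<le> poly (- p) (of_int t)" by (rule n)
  then have "poly p (of_int t) < 0" using \<open>0 < lead_coeff (- p)\<close> by simp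
  moreover have "H t = poly p (of_int t)"
  proof -
    have "H t = (\<Sum>i\<le>d. c i t * of_int t ^ i)" by (rule agree[OF tge(1)])
    also have "\<dots> = (\<Sum>i\<le>d. c i x * of_int t ^ i)"
      by (rule sum.cong[OF refl]) (simp add: t_def per_nat)
    also have "\<dots> = poly p (of_int t)" by (simp add: p_def poly_sum poly_monom)
    finally show ?thesis .
  qed
  ultimately show False using Hnn[of t] by simp
qed

lemma exists_pos: "\<exists>r. 0 < (\<Sum>a<MM. c d (r - int a * int m))"
proof -
  obtain x where x: "c d x \<noteq> 0" using cd_nz by auto
  then have "0 < c d x" using cd_nonneg[of x] by simp
  also have "c d x = c d (x - int 0 * int m)" by simp
  also have "\<dots> \<le> (\<Sum>a<MM. c d (x - int a * int m))"
    by (rule member_le_sum) (use MM_pos cd_nonneg in auto)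
  finally show ?thesis by blast
qed

end

lemma per_gen_nat: assumes "\<And>t. f (t + int p) = (f t :: 'a)" shows "f (t + int n * int p) = f t"
proof (induction n arbitrary: t)
  case 0 then show ?case by simp
next
  case (Suc n)
  have "f (t + int (Suc n) * int p) = f ((t + int n * int p) + int p)" by (simp add: algebra_simps)
  also have "\<dots> = f (t + int n * int p)" by (rule assms)
  finally show ?case using Suc by simp
qed

lemma per_gen: assumes "\<And>t. f (t + int p) = (f t :: 'a)" shows "f (t + k * int p) = f t"
proof (cases "0 \<le> k")
  case True
  then show ?thesis using per_gen_nat[of f p t "nat k", OF assms] by simp
next
  case False
  define n where "n = nat (- k)"
  have n: "k = - int n" using False by (simp add: n_def)
  have "f (t + k * int p) = f ((t + k * int p) + int n * int p)"
    using per_gen_nat[of f p, OF assms] by simp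
  also have "\<dots> = f t" using n by simp
  finally show ?thesis .
qed

lemma per_mod: assumes "\<And>t. f (t + int p) = (f t :: 'a)" shows "f (t mod int p) = f t"
proof -
  have "f (t mod int p + (t div int p) * int p) = f (t mod int p)"
    by (rule per_gen[of f p "t mod int p" "t div int p", OF assms])
  then show ?thesis by simp
qed

context qsetup begin

lemma Pf_exists:
  obtains Pf :: "int \<Rightarrow> rat poly" and Tf :: "int \<Rightarrow> int" where
    "\<And>r. degree (Pf r) \<le> Suc d"
    "\<And>r. coeff (Pf r) (Suc d) = (\<Sum>a<MM. c d (r - int a * int m)) / (of_nat qq * of_nat (Suc d))"
    "\<And>r t. Tf r \<le> t \<Longrightarrow> t mod int qq = r mod int qq \<Longrightarrow> H' t = poly (Pf r) (of_int t)"
proof -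
  have "\<forall>r. \<exists>PT. degree (fst PT) \<le> Suc d \<and>
     coeff (fst PT) (Suc d) = (\<Sum>a<MM. c d (r - int a * int m)) / (of_nat qq * of_nat (Suc d)) \<and>
     (\<forall>t. snd PT \<le> t \<longrightarrow> t mod int qq = r mod int qq \<longrightarrow> H' t = poly (fst PT) (of_int t))"
    using resid_poly by auto
  from choice[OF this] obtain F where F: "\<forall>r. degree (fst (F r)) \<le> Suc d \<and>
     coeff (fst (F r)) (Suc d) = (\<Sum>a<MM. c d (r - int a * int m)) / (of_nat qq * of_nat (Suc d)) \<and>
     (\<forall>t. snd (F r) \<le> t \<longrightarrow> t mod int qq = r mod int qq \<longrightarrow> H' t = poly (fst (F r)) (of_int t))" by blast
  show ?thesis by (rule that[of "\<lambda>r. fst (F r)" "\<lambda>r. snd (F r)"]) (use F in auto)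
qed

lemma cd_shift: "c d (r mod int qq - int a * int m) = c d (r - int a * int m)"
proof -
  have "r mod int qq - int a * int m = (r - int a * int m) + (- (r div int qq)) * int qq"
    by (simp add: algebra_simps minus_div_mult_eq_mod[symmetric])
  then have "c d (r mod int qq - int a * int m) = c d ((r - int a * int m) + (- (r div int qq)) * int qq)"
    by (simp only:)
  also have "\<dots> = c d (r - int a * int m)" by (rule per_qq) simp
  finally show ?thesis .
qed

lemma existence:
  "\<exists>d' c'. (\<forall>i\<le>d'. \<forall>t. c' i (t + int qq) = c' i t) \<and> c' d' \<noteq> (\<lambda>_. 0) \<and>
     (\<exists>T. \<forall>t\<ge>T. H' t = (\<Sum>i\<le>d'. c' i t * of_int t ^ i))"
proof -
  obtain Pf Tf where Pf: "\<And>r. degree (Pf r) \<le> Suc d"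
    "\<And>r. coeff (Pf r) (Suc d) = (\<Sum>a<MM. c d (r - int a * int m)) / (of_nat qq * of_nat (Suc d))"
    "\<And>r t. Tf r \<le> t \<Longrightarrow> t mod int qq = r mod int qq \<Longrightarrow> H' t = poly (Pf r) (of_int t)"
    by (rule Pf_exists) blast
  define c' where "c' = (\<lambda>i t. coeff (Pf (t mod int qq)) i)"
  define T where "T = Max (Tf ` {0..<int qq})"
  have per': "\<forall>i\<le>Suc d. \<forall>t. c' i (t + int qq) = c' i t" by (simp add: c'_def)
  obtain r0 where r0: "0 < (\<Sum>a<MM. c d (r0 - int a * int m))" using exists_pos by blast
  have "c' (Suc d) r0 = (\<Sum>a<MM. c d (r0 mod int qq - int a * int m)) / (of_nat qq * of_nat (Suc d))"
    by (simp add: c'_def Pf(2))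
  also have "\<dots> = (\<Sum>a<MM. c d (r0 - int a * int m)) / (of_nat qq * of_nat (Suc d))"
    by (simp add: cd_shift)
  finally have "c' (Suc d) r0 \<noteq> 0" using r0 qq_pos by simp
  then have nz: "c' (Suc d) \<noteq> (\<lambda>_. 0)" by metis
  have agr: "H' t = (\<Sum>i\<le>Suc d. c' i t * of_int t ^ i)" if "T \<le> t" for t
  proof -
    define r where "r = t mod int qq"
    have r: "r \<in> {0..<int qq}" using qq_pos by (simp add: r_def)
    have "Tf r \<le> T" unfolding T_def by (rule Max_ge) (use r in auto)
    then have "H' t = poly (Pf r) (of_int t)" using that by (intro Pf(3)) (auto simp: r_def)
    also have "\<dots> = (\<Sum>i\<le>degree (Pf r). coeff (Pf r) i * of_int t ^ i)" by (rule poly_altdef)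
    also have "\<dots> = (\<Sum>i\<le>Suc d. coeff (Pf r) i * of_int t ^ i)"
      by (rule sum.mono_neutral_left) (use Pf(1)[of r] in \<open>auto simp: coeff_eq_0\<close>)
    finally show ?thesis by (simp add: c'_def r_def)
  qed
  show ?thesis using per' nz agr by blast
qed

lemma uniqueness:
  assumes per'': "\<forall>i\<le>d'. \<forall>t. c'' i (t + int qq) = c'' i t" and nz: "c'' d' \<noteq> (\<lambda>_. 0)"
    and agr: "\<forall>t\<ge>T'. H' t = (\<Sum>i\<le>d'. c'' i t * of_int t ^ i)"
  shows "d' = Suc d \<and> c'' d' 0 = (\<Sum>a<MM. c d (0 - int a * int m)) / (of_nat qq * of_nat (Suc d))"
proof -
  obtain Pf Tf where Pf: "\<And>r. degree (Pf r) \<le> Suc d"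
    "\<And>r. coeff (Pf r) (Suc d) = (\<Sum>a<MM. c d (r - int a * int m)) / (of_nat qq * of_nat (Suc d))"
    "\<And>r t. Tf r \<le> t \<Longrightarrow> t mod int qq = r mod int qq \<Longrightarrow> H' t = poly (Pf r) (of_int t)"
    by (rule Pf_exists) blast
  define Q where "Q = (\<lambda>r. \<Sum>i\<le>d'. Polynomial.monom (c'' i r) i)"
  have cQ: "coeff (Q r) i = (if i \<le> d' then c'' i r else 0)" for r i
    by (simp add: Q_def coeff_sum coeff_monom)
  have QP: "Q r = Pf r" for r
  proof -
    define K where "K = nat (max T' (Tf r) - r)"
    show ?thesis
    proof (rule poly_eq_inf[where s="int qq" and r=r and K=K])
      show "0 < int qq" using qq_pos by simp
      fix k
      define t where "t = r + int (K + k) * int qq"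
      have "int (K + k) * 1 \<le> int (K + k) * int qq" by (rule mult_left_mono) (use qq_pos in auto)
      then have tge: "T' \<le> t" "Tf r \<le> t" by (auto simp: t_def K_def)
      have "t mod int qq = r mod int qq" by (simp add: t_def)
      then have "H' t = poly (Pf r) (of_int t)" using tge by (intro Pf(3))
      moreover have "H' t = (\<Sum>i\<le>d'. c'' i t * of_int t ^ i)" using agr tge by blast
      moreover have "c'' i t = c'' i r" if "i \<le> d'" for i
        unfolding t_def by (rule per_gen_nat) (use per'' that in auto)
      ultimately have "poly (Pf r) (of_int t) = (\<Sum>i\<le>d'. c'' i r * of_int t ^ i)" by simp
      also have "\<dots> = poly (Q r) (of_int t)" by (simp add: Q_def poly_sum poly_monom)
      finally show "poly (Q r) (of_int t) = poly (Pf r) (of_int t)" by simp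
    qed
  qed
  have perI: "c'' i (x mod int qq) = c'' i x" if "i \<le> d'" for i x
    by (rule per_mod) (use per'' that in auto)
  obtain x where x: "c'' d' x \<noteq> 0" using nz by auto
  then have "coeff (Pf (x mod int qq)) d' \<noteq> 0" using QP cQ perI by (metis order.refl)
  then have "d' \<le> degree (Pf (x mod int qq))" by (rule le_degree)
  then have le: "d' \<le> Suc d" using Pf(1) order.trans by blast
  obtain r0 where r0: "0 < (\<Sum>a<MM. c d (r0 - int a * int m))" using exists_pos by blast
  have "coeff (Pf r0) (Suc d) \<noteq> 0" using r0 qq_pos by (simp add: Pf(2))
  then have "coeff (Q r0) (Suc d) \<noteq> 0" using QP by simp
  then have "Suc d \<le> d'" using cQ by (metis)
  then have dd: "d' = Suc d" using le by simp
  have "c'' d' 0 = coeff (Q 0) d'" using cQ by simp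
  also have "\<dots> = coeff (Pf 0) (Suc d)" using QP dd by simp
  finally show ?thesis using dd Pf(2) by simp
qed

end

lemma sum_bij:
  fixes f :: "int \<Rightarrow> rat" and q m :: nat
  assumes q: "0 < q" and m: "0 < m" and per: "\<And>t. f (t + int q) = f t"
  shows "(\<Sum>a<lcm q m div m. f (0 - int a * int m)) = (\<Sum>j\<in>{j. j < q \<and> gcd m q dvd j}. f (int j))"
proof -
  define g where "g = gcd m q"
  have g0: "0 < g" using q by (simp add: g_def)
  have "g dvd q" by (simp add: g_def)
  then obtain q1 where q1: "q = g * q1" by (rule dvdE)
  have "g dvd m" by (simp add: g_def)
  then obtain m1 where m1: "m = g * m1" by (rule dvdE)
  have cop: "coprime q1 m1"
  proof -
    have "gcd m q = g * gcd m1 q1" using q1 m1 by (simp add: gcd_mult_left)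
    then have "gcd m1 q1 = 1" using g0 q by (auto simp: g_def)
    then show ?thesis by (simp add: coprime_iff_gcd_eq_1 gcd.commute)
  qed
  have lcmq: "lcm q m = q1 * m"
  proof -
    have "lcm q m * gcd q m = q * m" by (simp add: lcm_nat_def)
    also have "gcd q m = g" by (simp add: g_def gcd.commute)
    finally have "lcm q m * g = (q1 * m) * g" using q1 by (simp add: algebra_simps)
    then show ?thesis using g0 by simp
  qed
  have M: "lcm q m div m = q1" using lcmq m by simp
  define phi where "phi = (\<lambda>a::nat. nat ((- (int a * int m)) mod int q))"
  have phi_int: "int (phi a) = (- (int a * int m)) mod int q" for a
    using q by (simp add: phi_def)
  have fphi: "f (0 - int a * int m) = f (int (phi a))" for a
    using per_mod[of f q "- (int a * int m)", OF per] phi_int[of a] by simp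
  have inj: "inj_on phi {..<q1}"
  proof (rule inj_onI)
    fix a b assume a: "a \<in> {..<q1}" and b: "b \<in> {..<q1}" and e: "phi a = phi b"
    then have "(- (int a * int m)) mod int q = (- (int b * int m)) mod int q"
      using e phi_int[of a] phi_int[of b] by simp
    then have "int q dvd (- (int a * int m)) - (- (int b * int m))" by (simp add: mod_eq_dvd_iff)
    then have "int g * int q1 dvd int g * ((int b - int a) * int m1)"
      using q1 m1 by (simp add: algebra_simps)
    then have "int q1 dvd (int b - int a) * int m1" using g0 by simp
    moreover have "coprime (int q1) (int m1)" using cop by simp
    ultimately have "int q1 dvd int b - int a" by (simp add: coprime_dvd_mult_left_iff)
    moreover have "\<bar>int b - int a\<bar> < int q1" using a b by auto
    ultimately have "int b - int a = 0"
    proof -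
      assume d: "int q1 dvd int b - int a" and l: "\<bar>int b - int a\<bar> < int q1"
      show ?thesis
      proof (rule ccontr)
        assume "int b - int a \<noteq> 0"
        then have "\<bar>int q1\<bar> \<le> \<bar>int b - int a\<bar>" using d by (rule dvd_imp_le_int)
        then show False using l by simp
      qed
    qed
    then show "a = b" by simp
  qed
  define S where "S = {j. j < q \<and> g dvd j}"
  have sub: "phi ` {..<q1} \<subseteq> S"
  proof
    fix j assume "j \<in> phi ` {..<q1}"
    then obtain a where ja: "j = phi a" by blast
    have "int j < int q" using ja phi_int[of a] q by simp
    moreover have "int g dvd int j"
    proof -
      have "int g dvd int q" using q1 by simp
      moreover have "int g dvd - (int a * int m)" using m1 by simp
      ultimately have "int g dvd (- (int a * int m)) mod int q" by (simp add: dvd_mod)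
      then show ?thesis using ja phi_int by simp
    qed
    ultimately show "j \<in> S" by (simp add: S_def)
  qed
  have S_eq: "S = (\<lambda>k. g * k) ` {..<q1}"
  proof
    show "S \<subseteq> (\<lambda>k. g * k) ` {..<q1}"
    proof
      fix j assume "j \<in> S"
      then obtain k where k: "j = g * k" "j < q" by (auto simp: S_def)
      then have "k < q1" using q1 g0 by simp
      then show "j \<in> (\<lambda>k. g * k) ` {..<q1}" using k by blast
    qed
    show "(\<lambda>k. g * k) ` {..<q1} \<subseteq> S"
    proof
      fix j assume "j \<in> (\<lambda>k. g * k) ` {..<q1}"
      then obtain k where k: "j = g * k" "k < q1" by blast
      then have "g * k < g * q1" using g0 by simp
      then show "j \<in> S" using k q1 by (simp add: S_def)
    qed
  qed
  have cardS: "card S = q1"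
    unfolding S_eq by (subst card_image) (use g0 in \<open>auto simp: inj_on_def\<close>)
  have "card (phi ` {..<q1}) = q1" using inj by (simp add: card_image)
  then have img: "phi ` {..<q1} = S"
    using sub cardS by (intro card_subset_eq) (auto simp: S_eq)
  have "(\<Sum>a<lcm q m div m. f (0 - int a * int m)) = (\<Sum>a<q1. f (int (phi a)))"
    using M fphi by simp
  also have "\<dots> = (\<Sum>j\<in>phi ` {..<q1}. f (int j))"
    by (rule sum.reindex[OF inj, symmetric, unfolded comp_def])
  also have "\<dots> = (\<Sum>j\<in>S. f (int j))" using img by simp
  finally show ?thesis by (simp add: S_def g_def)
qed

theorem lemma2p12:
  fixes w :: "nat list" and m d :: nat and I :: "'k::alg_closed_field mpoly set"
    and c :: "nat \<Rightarrow> int \<Rightarrow> rat"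
  assumes "w \<noteq> []" and "\<forall>x\<in>set w. 0 < x"
    and "homog_ideal w I" and "saturated w I"
    and "hilb_qpoly w I d c"
    and "0 < m"
  shows "(\<exists>d' c'. hilb_qpoly (w @ [m]) (ext_ideal (w @ [m]) I) d' c') \<and>
    (\<forall>d' c'. hilb_qpoly (w @ [m]) (ext_ideal (w @ [m]) I) d' c' \<longrightarrow>
       fact d' * c' d' 0 =
       fact d / rat_of_nat (Lcm (set (w @ [m])))
         * (\<Sum>j\<in>{j. j < Lcm (set w) \<and> gcd m (Lcm (set w)) dvd j}. c d (int j)))"
proof -
  note pos = assms(2) and mpos = assms(6)
  have I: "ideal_in w I" using assms(3) by (simp add: homog_ideal_def)
  have Iring: "I \<subseteq> {p. in_ring (w @ [m]) p}"
    using I by (auto simp: ideal_in_def intro: in_ring_mono)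
  define J where "J = ext_ideal (w @ [m]) I"
  have J: "J = gen (w @ [m]) I" unfolding J_def by (rule ext_ideal_gen[OF Iring])
  define q where "q = Lcm (set w)"
  have "0 \<notin> set w" using pos by auto
  then have "Lcm (set w) \<noteq> 0" by (metis Lcm_0_iff finite_set)
  then have q0: "0 < q" unfolding q_def by (metis gr0I)
  have qq_eq: "Lcm (set (w @ [m])) = lcm q m" by (simp add: q_def lcm.commute)
  define H where "H = (\<lambda>t. rat_of_nat (hilb w I t))"
  define H' where "H' = (\<lambda>t. rat_of_nat (hilb (w @ [m]) J t))"
  obtain t0 where per: "\<And>i t. i \<le> d \<Longrightarrow> c i (t + int q) = c i t" and cnz: "c d \<noteq> (\<lambda>_. 0)"
    and agr: "\<And>t. t0 \<le> t \<Longrightarrow> H t = (\<Sum>i\<le>d. c i t * of_int t ^ i)"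
    using assms(5) by (auto simp: hilb_qpoly_def H_def q_def)
  interpret qs: qsetup H H' q m d c t0
  proof
    show "0 < q" by (rule q0)
    show "0 < m" by (rule mpos)
    show "H' t = H t + H' (t - int m)" for t
      using hilb_rec[OF pos mpos I, of t] by (simp add: H_def H'_def J)
    show "c i (t + int q) = c i t" if "i \<le> d" for i t using per that .
    show "H t = (\<Sum>i\<le>d. c i t * of_int t ^ i)" if "t0 \<le> t" for t using agr that .
    show "0 \<le> H t" for t by (simp add: H_def)
    show "c d \<noteq> (\<lambda>_. 0)" by (rule cnz)
  qed
  have qq: "qs.qq = Lcm (set (w @ [m]))" by (simp only: qs.qq_def qq_eq)
  have ex: "\<exists>d' c'. hilb_qpoly (w @ [m]) J d' c'"
  proof -
    obtain d' c' where "\<forall>i\<le>d'. \<forall>t. c' i (t + int qs.qq) = c' i t" "c' d' \<noteq> (\<lambda>_. 0)"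
      "\<exists>T. \<forall>t\<ge>T. H' t = (\<Sum>i\<le>d'. c' i t * of_int t ^ i)"
      using qs.existence by blast
    then have "hilb_qpoly (w @ [m]) J d' c'" by (simp add: hilb_qpoly_def qq H'_def)
    then show ?thesis by blast
  qed
  have sb: "(\<Sum>a<qs.MM. c d (0 - int a * int m)) = (\<Sum>j\<in>{j. j < q \<and> gcd m q dvd j}. c d (int j))"
    unfolding qs.MM_def qs.qq_def by (rule sum_bij[OF q0 mpos]) (use per in auto)
  have un: "fact d' * c' d' 0 =
       fact d / rat_of_nat (Lcm (set (w @ [m])))
         * (\<Sum>j\<in>{j. j < Lcm (set w) \<and> gcd m (Lcm (set w)) dvd j}. c d (int j))"
    if h: "hilb_qpoly (w @ [m]) J d' c'" for d' c'
  proof -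
    from h obtain T' where per'': "\<forall>i\<le>d'. \<forall>t. c' i (t + int qs.qq) = c' i t" and nz: "c' d' \<noteq> (\<lambda>_. 0)"
      and agr': "\<forall>t\<ge>T'. H' t = (\<Sum>i\<le>d'. c' i t * of_int t ^ i)"
      by (auto simp: hilb_qpoly_def qq H'_def)
    have u: "d' = Suc d \<and> c' d' 0 = (\<Sum>a<qs.MM. c d (0 - int a * int m)) / (of_nat qs.qq * of_nat (Suc d))"
      by (rule qs.uniqueness[OF per'' nz agr'])
    from u have dd: "d' = Suc d" and cv: "c' d' 0 = (\<Sum>a<qs.MM. c d (0 - int a * int m)) / (of_nat qs.qq * of_nat (Suc d))"
      by blast+
    have "fact d' * c' d' 0 = fact (Suc d) * ((\<Sum>a<qs.MM. c d (0 - int a * int m)) / (of_nat qs.qq * of_nat (Suc d)))"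
    proof -
      have cv': "c' (Suc d) 0 = (\<Sum>a<qs.MM. c d (0 - int a * int m)) / (of_nat qs.qq * of_nat (Suc d))"
        using cv unfolding dd .
      show ?thesis by (simp only: dd cv')
    qed
    also have "\<dots> = fact d / of_nat qs.qq * (\<Sum>a<qs.MM. c d (0 - int a * int m))"
      by (simp add: field_simps del: of_nat_Suc)
    finally show ?thesis using sb qq by (simp add: q_def)
  qed
  show ?thesis using ex un by (simp add: J_def)
qed

end
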